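(* Let $G$ be a group and $\xi:G\to\mathbb{R}$ a homomorphism. The projection $p:K_1(\widehat{\mathbb{Z}G}_\xi)\to\overline{K}_1^G(\widehat{\mathbb{Z}G}_\xi)$ restricted to $W$ induces an isomorphism $W\to\overline{W}$.
   Context: $\widehat{\mathbb{Z}G}_\xi$ is the Novikov ring: functions $\lambda:G\to\mathbb{Z}$ such that for every $r\in\mathbb{R}$ only finitely many $g$ with $\xi(g)\ge r$ have $\lambda(g)\neq0$, with pointwise addition and product $(\lambda\mu)(g)=\sum_{h_1h_2=g}\lambda(h_1)\mu(h_2)$. The norm is $\|\lambda\|=\inf\{t>0:\xi(g)\le\log t\text{ whenever }\lambda(g)\ne0\}$. For $\|a\|<1$, $1-a$ is a unit (inverse $\sum_{k\ge0}a^k$) and these units form a group. $W\subset K_1(\widehat{\mathbb{Z}G}_\xi)$ is the image of this group, $\overline{K}_1^G(\widehat{\mathbb{Z}G}_\xi)=K_1(\widehat{\mathbb{Z}G}_\xi)/\langle\pm[g]:g\in G\rangle$, and $\overline W=p(W)$. *)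

theory Defs
  imports Complex_Main "HOL-Algebra.Coset" "HOL-Algebra.Ring" "HOL-Algebra.Generated_Groups"
begin

definition nov_carrier :: "('g,'b) monoid_scheme \<Rightarrow> ('g \<Rightarrow> real) \<Rightarrow> ('g \<Rightarrow> int) set" where
  "nov_carrier G \<xi> = {f. (\<forall>g. g \<notin> carrier G \<longrightarrow> f g = 0) \<and>
      (\<forall>r::real. finite {g \<in> carrier G. \<xi> g \<ge> r \<and> f g \<noteq> 0})}"

text \<open>(f h)(g) = sum over h1 h2 = g of f(h1) h(h2), i.e. over h1 with h2 = inv h1 * g.\<close>
definition nov_mult :: "('g,'b) monoid_scheme \<Rightarrow> ('g \<Rightarrow> int) \<Rightarrow> ('g \<Rightarrow> int) \<Rightarrow> 'g \<Rightarrow> int" where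
  "nov_mult G f h = (\<lambda>g. if g \<in> carrier G then
      (\<Sum>k \<in> {k \<in> carrier G. f k \<noteq> 0 \<and> h (inv\<^bsub>G\<^esub> k \<otimes>\<^bsub>G\<^esub> g) \<noteq> 0}.
          f k * h (inv\<^bsub>G\<^esub> k \<otimes>\<^bsub>G\<^esub> g))
      else 0)"

definition novikov_ring :: "('g,'b) monoid_scheme \<Rightarrow> ('g \<Rightarrow> real) \<Rightarrow> ('g \<Rightarrow> int) ring" where
  "novikov_ring G \<xi> = \<lparr>carrier = nov_carrier G \<xi>, mult = nov_mult G,
      one = (\<lambda>g. if g = \<one>\<^bsub>G\<^esub> then 1 else 0),
      zero = (\<lambda>_. 0), add = (\<lambda>f h g. f g + h g)\<rparr>"

definition nov_norm :: "('g \<Rightarrow> real) \<Rightarrow> ('g \<Rightarrow> int) \<Rightarrow> real" where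
  "nov_norm \<xi> f = Inf {t::real. t > 0 \<and> (\<forall>g. f g \<noteq> 0 \<longrightarrow> \<xi> g \<le> ln t)}"

text \<open>Infinite matrices over R that differ from the identity in only finitely many
entries (this is GL(R) = union of the GL_n(R), stabilised).\<close>

definition mat_one :: "('a,'b) ring_scheme \<Rightarrow> nat \<Rightarrow> nat \<Rightarrow> 'a" where
  "mat_one R = (\<lambda>i j. if i = j then \<one>\<^bsub>R\<^esub> else \<zero>\<^bsub>R\<^esub>)"

definition finitary :: "('a,'b) ring_scheme \<Rightarrow> (nat \<Rightarrow> nat \<Rightarrow> 'a) \<Rightarrow> bool" where
  "finitary R A \<longleftrightarrow> (\<forall>i j. A i j \<in> carrier R) \<and> finite {(i,j). A i j \<noteq> mat_one R i j}"

definition mat_mult :: "('a,'b) ring_scheme \<Rightarrow> (nat \<Rightarrow> nat \<Rightarrow> 'a) \<Rightarrow> (nat \<Rightarrow> nat \<Rightarrow> 'a) \<Rightarrow> nat \<Rightarrow> nat \<Rightarrow> 'a" where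
  "mat_mult R A B = (\<lambda>i j. finsum R (\<lambda>k. A i k \<otimes>\<^bsub>R\<^esub> B k j) {k. A i k \<noteq> \<zero>\<^bsub>R\<^esub>})"

definition GL :: "('a,'b) ring_scheme \<Rightarrow> (nat \<Rightarrow> nat \<Rightarrow> 'a) monoid" where
  "GL R = \<lparr>carrier = {A. finitary R A \<and> (\<exists>B. finitary R B \<and>
              mat_mult R A B = mat_one R \<and> mat_mult R B A = mat_one R)},
           mult = mat_mult R, one = mat_one R\<rparr>"

definition elem_mat :: "('a,'b) ring_scheme \<Rightarrow> nat \<Rightarrow> nat \<Rightarrow> 'a \<Rightarrow> nat \<Rightarrow> nat \<Rightarrow> 'a" where
  "elem_mat R i j r = (mat_one R)(i := (mat_one R i)(j := r))"

definition EL :: "('a,'b) ring_scheme \<Rightarrow> (nat \<Rightarrow> nat \<Rightarrow> 'a) set" where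
  "EL R = generate (GL R) {elem_mat R i j r | i j r. i \<noteq> j \<and> r \<in> carrier R}"

definition K1 :: "('a,'b) ring_scheme \<Rightarrow> (nat \<Rightarrow> nat \<Rightarrow> 'a) set monoid" where
  "K1 R = GL R Mod EL R"

definition embed1 :: "('a,'b) ring_scheme \<Rightarrow> 'a \<Rightarrow> nat \<Rightarrow> nat \<Rightarrow> 'a" where
  "embed1 R u = (mat_one R)(0 := (mat_one R 0)(0 := u))"

definition k1_class :: "('a,'b) ring_scheme \<Rightarrow> 'a \<Rightarrow> (nat \<Rightarrow> nat \<Rightarrow> 'a) set" where
  "k1_class R u = EL R #>\<^bsub>GL R\<^esub> embed1 R u"

definition nov_small_units :: "('g,'b) monoid_scheme \<Rightarrow> ('g \<Rightarrow> real) \<Rightarrow> ('g \<Rightarrow> int) set" where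
  "nov_small_units G \<xi> = {(\<lambda>g. \<one>\<^bsub>novikov_ring G \<xi>\<^esub> g - a g) | a.
      a \<in> carrier (novikov_ring G \<xi>) \<and> nov_norm \<xi> a < 1}"

definition nov_W :: "('g,'b) monoid_scheme \<Rightarrow> ('g \<Rightarrow> real) \<Rightarrow> (nat \<Rightarrow> nat \<Rightarrow> ('g \<Rightarrow> int)) set set" where
  "nov_W G \<xi> = k1_class (novikov_ring G \<xi>) ` nov_small_units G \<xi>"

definition nov_trivial :: "('g,'b) monoid_scheme \<Rightarrow> ('g \<Rightarrow> real) \<Rightarrow> (nat \<Rightarrow> nat \<Rightarrow> ('g \<Rightarrow> int)) set set" where
  "nov_trivial G \<xi> = generate (K1 (novikov_ring G \<xi>))
      {k1_class (novikov_ring G \<xi>) (\<lambda>h. if h = g then s else 0) | g s.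
         g \<in> carrier G \<and> (s = 1 \<or> s = -1)}"

definition nov_proj :: "('g,'b) monoid_scheme \<Rightarrow> ('g \<Rightarrow> real) \<Rightarrow> (nat \<Rightarrow> nat \<Rightarrow> ('g \<Rightarrow> int)) set \<Rightarrow> (nat \<Rightarrow> nat \<Rightarrow> ('g \<Rightarrow> int)) set set" where
  "nov_proj G \<xi> x = nov_trivial G \<xi> #>\<^bsub>K1 (novikov_ring G \<xi>)\<^esub> x"

end

theory Submission
  imports Defs "HOL-Combinatorics.Permutations"
begin


context cring
begin

definition sgnr :: "(nat \<Rightarrow> nat) \<Rightarrow> 'a" where
  "sgnr p = (if evenperm p then \<one> else \<ominus> \<one>)"

definition detn :: "nat \<Rightarrow> (nat \<Rightarrow> nat \<Rightarrow> 'a) \<Rightarrow> 'a" where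
  "detn n A = (\<Oplus>p\<in>{p. p permutes {..<n}}. sgnr p \<otimes> (\<Otimes>i\<in>{..<n}. A i (p i)))"

lemma sgnr_carr[simp]: "sgnr p \<in> carrier R" by (simp add: sgnr_def)

lemma fprod_split:
  assumes "finite I" "i \<in> I" "f \<in> I \<rightarrow> carrier R"
  shows "finprod R f I = f i \<otimes> finprod R f (I - {i})"
proof -
  have "I = insert i (I - {i})" using assms by auto
  then have "finprod R f I = finprod R f (insert i (I - {i}))" by simp
  also have "\<dots> = f i \<otimes> finprod R f (I - {i})" using assms by (intro finprod_insert) auto
  finally show ?thesis .
qed

lemma row_prod:
  assumes i: "i < (n::nat)" and A: "\<And>l m. A l m \<in> carrier R" and z: "\<And>m. z m \<in> carrier R"
  shows "(\<Otimes>l\<in>{..<n}. (A(i := z)) l (p l)) = z (p i) \<otimes> (\<Otimes>l\<in>{..<n} - {i}. A l (p l))"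
proof -
  have "(\<Otimes>l\<in>{..<n}. (A(i := z)) l (p l)) = (A(i := z)) i (p i) \<otimes> (\<Otimes>l\<in>{..<n} - {i}. (A(i := z)) l (p l))"
    by (rule fprod_split) (use i A z in \<open>auto simp: Pi_def\<close>)
  also have "(\<Otimes>l\<in>{..<n} - {i}. (A(i := z)) l (p l)) = (\<Otimes>l\<in>{..<n} - {i}. A l (p l))"
    by (intro finprod_cong') (use A in auto)
  finally show ?thesis by simp
qed

lemma row_lin:
  assumes i: "i < n" and A: "\<And>l m. A l m \<in> carrier R" and x: "\<And>m. x m \<in> carrier R"
    and y: "\<And>m. y m \<in> carrier R" and r: "r \<in> carrier R"
  shows "detn n (A(i := (\<lambda>m. x m \<oplus> r \<otimes> y m))) = detn n (A(i := x)) \<oplus> r \<otimes> detn n (A(i := y))"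
proof -
  let ?P = "{p. p permutes {..<n}}"
  have fP: "finite ?P" by (simp add: finite_permutations)
  let ?Q = "\<lambda>p. (\<Otimes>l\<in>{..<n} - {i}. A l (p l))"
  have Qc: "?Q p \<in> carrier R" for p using A by (auto intro!: finprod_closed)
  have z: "\<And>m. x m \<oplus> r \<otimes> y m \<in> carrier R" using x y r by simp
  have rz: "(\<Otimes>l\<in>{..<n}. (A(i := (\<lambda>m. x m \<oplus> r \<otimes> y m))) l (p l)) = (x (p i) \<oplus> r \<otimes> y (p i)) \<otimes> ?Q p" for p
    using row_prod[where z="\<lambda>m. x m \<oplus> r \<otimes> y m", OF i A z] by simp
  have rx: "(\<Otimes>l\<in>{..<n}. (A(i := x)) l (p l)) = x (p i) \<otimes> ?Q p" for p
    using row_prod[where z=x, OF i A x] by simp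
  have ry: "(\<Otimes>l\<in>{..<n}. (A(i := y)) l (p l)) = y (p i) \<otimes> ?Q p" for p
    using row_prod[where z=y, OF i A y] by simp
  have "detn n (A(i := (\<lambda>m. x m \<oplus> r \<otimes> y m))) = (\<Oplus>p\<in>?P. sgnr p \<otimes> ((x (p i) \<oplus> r \<otimes> y (p i)) \<otimes> ?Q p))"
    unfolding detn_def by (intro finsum_cong') (use rz Qc x y r in auto)
  also have "\<dots> = (\<Oplus>p\<in>?P. sgnr p \<otimes> (x (p i) \<otimes> ?Q p) \<oplus> r \<otimes> (sgnr p \<otimes> (y (p i) \<otimes> ?Q p)))"
  proof (intro finsum_cong')
    fix p
    have c: "sgnr p \<in> carrier R" "x (p i) \<in> carrier R" "y (p i) \<in> carrier R" "?Q p \<in> carrier R" using x y Qc by auto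
    show "sgnr p \<otimes> ((x (p i) \<oplus> r \<otimes> y (p i)) \<otimes> ?Q p) = sgnr p \<otimes> (x (p i) \<otimes> ?Q p) \<oplus> r \<otimes> (sgnr p \<otimes> (y (p i) \<otimes> ?Q p))"
      using c r by (simp add: l_distr r_distr m_assoc m_lcomm)
  qed (use x y Qc r in auto)
  also have "\<dots> = (\<Oplus>p\<in>?P. sgnr p \<otimes> (x (p i) \<otimes> ?Q p)) \<oplus> r \<otimes> (\<Oplus>p\<in>?P. sgnr p \<otimes> (y (p i) \<otimes> ?Q p))"
    using x y Qc r by (simp add: finsum_addf finsum_rdistr fP)
  also have "(\<Oplus>p\<in>?P. sgnr p \<otimes> (x (p i) \<otimes> ?Q p)) = detn n (A(i := x))"
    unfolding detn_def by (intro finsum_cong') (use rx Qc x in auto)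
  also have "(\<Oplus>p\<in>?P. sgnr p \<otimes> (y (p i) \<otimes> ?Q p)) = detn n (A(i := y))"
    unfolding detn_def by (intro finsum_cong') (use ry Qc y in auto)
  finally show ?thesis .
qed

lemma detn_alt:
  assumes no2: "\<And>x. x \<in> carrier R \<Longrightarrow> x \<oplus> x = \<zero> \<Longrightarrow> x = \<zero>"
    and ij: "i \<noteq> j" "i < n" "j < n" and A: "\<And>l m. A l m \<in> carrier R" and eq: "A i = A j"
  shows "detn n A = \<zero>"
proof -
  let ?P = "{p. p permutes {..<n}}"
  have fP: "finite ?P" by (simp add: finite_permutations)
  define t where "t = transpose i j"
  have tp: "t permutes {..<n}" unfolding t_def using ij by (intro permutes_swap_id) auto
  have tt: "t \<circ> t = id" unfolding t_def by (simp add: fun_eq_iff)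
  let ?T = "\<lambda>p. sgnr p \<otimes> (\<Otimes>l\<in>{..<n}. A l (p l))"
  have Tc: "?T p \<in> carrier R" for p using A by (auto intro!: finprod_closed)
  have inj: "inj_on (\<lambda>p. p \<circ> t) ?P"
    by (intro inj_onI) (metis comp_assoc comp_id tt)
  have img: "(\<lambda>p. p \<circ> t) ` ?P = ?P"
  proof (intro equalityI subsetI)
    fix q assume "q \<in> (\<lambda>p. p \<circ> t) ` ?P"
    then show "q \<in> ?P" using permutes_compose[OF tp] by auto
  next
    fix q assume q: "q \<in> ?P"
    then have "q \<circ> t \<in> ?P" using permutes_compose[OF tp] by auto
    moreover have "q = (q \<circ> t) \<circ> t" by (simp add: comp_assoc tt)
    ultimately show "q \<in> (\<lambda>p. p \<circ> t) ` ?P" by blast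
  qed
  have Tneg: "?T (p \<circ> t) = \<ominus> ?T p" if p: "p \<in> ?P" for p
  proof -
    have perm: "permutation p" "permutation t"
      using p tp by (auto simp: permutation_permutes)
    have nt: "\<not> evenperm t" using evenperm_swap[of i j] ij unfolding t_def by simp
    have ev: "evenperm (p \<circ> t) = (\<not> evenperm p)"
      using evenperm_comp[OF perm] nt by simp
    have At: "A (t l) = A l" for l unfolding t_def using eq
      by (cases "l = i"; cases "l = j") (auto simp: transpose_def)
    have "(\<Otimes>l\<in>{..<n}. A l ((p \<circ> t) l)) = (\<Otimes>l\<in>{..<n}. A (t l) (p (t l)))"
      by (intro finprod_cong') (use A At in auto)
    also have "\<dots> = (\<Otimes>l\<in>t ` {..<n}. A l (p l))"
      by (rule finprod_reindex[symmetric]) (use A permutes_inj_on[OF tp] in auto)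
    also have "t ` {..<n} = {..<n}" using permutes_image[OF tp] .
    finally have pe: "(\<Otimes>l\<in>{..<n}. A l ((p \<circ> t) l)) = (\<Otimes>l\<in>{..<n}. A l (p l))" .
    have c: "(\<Otimes>l\<in>{..<n}. A l (p l)) \<in> carrier R" using A by (auto intro!: finprod_closed)
    show ?thesis using ev pe c by (simp add: sgnr_def l_minus)
  qed
  have "detn n A = (\<Oplus>p\<in>(\<lambda>p. p \<circ> t) ` ?P. ?T p)" unfolding detn_def img ..
  also have "\<dots> = (\<Oplus>p\<in>?P. ?T (p \<circ> t))"
    by (rule finsum_reindex) (use Tc inj in auto)
  also have "\<dots> = (\<Oplus>p\<in>?P. \<ominus> ?T p)"
    by (intro finsum_cong') (use Tneg Tc in auto)
  finally have d: "detn n A = (\<Oplus>p\<in>?P. \<ominus> ?T p)" .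
  have dc: "detn n A \<in> carrier R" unfolding detn_def using Tc by (auto intro!: finsum_closed)
  have "detn n A \<oplus> detn n A = (\<Oplus>p\<in>?P. ?T p) \<oplus> (\<Oplus>p\<in>?P. \<ominus> ?T p)"
    using d unfolding detn_def by simp
  also have "\<dots> = (\<Oplus>p\<in>?P. ?T p \<oplus> \<ominus> ?T p)"
    using Tc by (simp add: finsum_addf)
  also have "\<dots> = \<zero>" using Tc by (simp add: r_neg)
  finally have "detn n A \<oplus> detn n A = \<zero>" .
  thus ?thesis using no2 dc by blast
qed

lemma detn_rowop:
  assumes no2: "\<And>x. x \<in> carrier R \<Longrightarrow> x \<oplus> x = \<zero> \<Longrightarrow> x = \<zero>"
    and ij: "i \<noteq> j" "i < n" "j < n" and A: "\<And>l m. A l m \<in> carrier R" and r: "r \<in> carrier R"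
  shows "detn n (A(i := (\<lambda>m. A i m \<oplus> r \<otimes> A j m))) = detn n A"
proof -
  have "detn n (A(i := (\<lambda>m. A i m \<oplus> r \<otimes> A j m))) = detn n (A(i := A i)) \<oplus> r \<otimes> detn n (A(i := A j))"
    by (rule row_lin) (use ij A r in auto)
  moreover have "detn n (A(i := A j)) = \<zero>"
    by (rule detn_alt[OF no2 ij]) (use A ij in auto)
  moreover have "detn n A \<in> carrier R" unfolding detn_def using A by (auto intro!: finsum_closed finprod_closed)
  ultimately show ?thesis using r by simp
qed

lemma detn_diag:
  assumes A: "\<And>l m. A l m \<in> carrier R" and off: "\<And>l m. l \<noteq> m \<Longrightarrow> A l m = \<zero>"
  shows "detn n A = (\<Otimes>l\<in>{..<n}. A l l)"
proof -
  let ?P = "{p. p permutes {..<n}}"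
  have fP: "finite ?P" by (simp add: finite_permutations)
  have idP: "id \<in> ?P" by (simp add: permutes_id)
  have z: "sgnr p \<otimes> (\<Otimes>l\<in>{..<n}. A l (p l)) = \<zero>" if p: "p \<in> ?P - {id}" for p
  proof -
    from p obtain l where l: "p l \<noteq> l" by (auto simp: fun_eq_iff)
    then have ln: "l < n" using p by (auto simp: permutes_def)
    have "(\<Otimes>l\<in>{..<n}. A l (p l)) = A l (p l) \<otimes> (\<Otimes>k\<in>{..<n} - {l}. A k (p k))"
      by (rule fprod_split) (use ln A in auto)
    also have "\<dots> = \<zero>" using off[OF l[symmetric]] A by (auto intro!: finprod_closed)
    finally show ?thesis by simp
  qed
  have "detn n A = (\<Oplus>p\<in>{id}. sgnr p \<otimes> (\<Otimes>l\<in>{..<n}. A l (p l)))"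
    unfolding detn_def
    by (rule add.finprod_mono_neutral_cong_right) (use fP idP z A in \<open>auto intro!: finprod_closed\<close>)
  also have "\<dots> = (\<Otimes>l\<in>{..<n}. A l l)" using A by (simp add: sgnr_def finprod_closed)
  finally show ?thesis .
qed

end


locale novctx = group G for G (structure) +
  fixes xi :: "'a \<Rightarrow> real"
  assumes xi_hom: "\<lbrakk>x \<in> carrier G; y \<in> carrier G\<rbrakk> \<Longrightarrow> xi (x \<otimes> y) = xi x + xi y"
begin

lemma xi_one[simp]: "xi \<one> = 0"
  using xi_hom[of \<one> \<one>] by simp

lemma xi_inv[simp]: "x \<in> carrier G \<Longrightarrow> xi (inv x) = - xi x"
  using xi_hom[of x "inv x"] by simp

lemma xi_invmult: "x \<in> carrier G \<Longrightarrow> y \<in> carrier G \<Longrightarrow> xi (inv x \<otimes> y) = xi y - xi x"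
  by (simp add: xi_hom)

abbreviation "NC \<equiv> nov_carrier G xi"

lemma NC_out: "f \<in> NC \<Longrightarrow> g \<notin> carrier G \<Longrightarrow> f g = 0"
  by (simp add: nov_carrier_def)

lemma NC_nz: "f \<in> NC \<Longrightarrow> f g \<noteq> 0 \<Longrightarrow> g \<in> carrier G"
  using NC_out by blast

lemma NC_fin: "f \<in> NC \<Longrightarrow> finite {g. r \<le> xi g \<and> f g \<noteq> 0}"
proof -
  assume f: "f \<in> NC"
  have "{g. r \<le> xi g \<and> f g \<noteq> 0} = {g \<in> carrier G. xi g \<ge> r \<and> f g \<noteq> 0}"
    using NC_nz[OF f] by auto
  thus ?thesis using f by (simp add: nov_carrier_def)
qed

lemma NC_bound: "f \<in> NC \<Longrightarrow> \<exists>M. \<forall>g. f g \<noteq> 0 \<longrightarrow> xi g \<le> M"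
proof (cases "\<exists>g0. f g0 \<noteq> 0")
  case False thus ?thesis by auto
next
  case True
  assume f: "f \<in> NC"
  then obtain g0 where g0: "f g0 \<noteq> 0" using True by auto
  let ?S = "{g. xi g0 \<le> xi g \<and> f g \<noteq> 0}"
  have fin: "finite ?S" using NC_fin[OF f] .
  have ne: "g0 \<in> ?S" using g0 by auto
  show ?thesis
  proof (intro exI allI impI)
    fix g assume "f g \<noteq> 0"
    show "xi g \<le> Max (xi ` ?S)"
    proof (cases "xi g0 \<le> xi g")
      case True
      then have "g \<in> ?S" using \<open>f g \<noteq> 0\<close> by auto
      thus ?thesis using fin by (simp add: Max_ge)
    next
      case False
      have "xi g0 \<le> Max (xi ` ?S)" using fin ne by (simp add: Max_ge)
      thus ?thesis using False by linarith
    qed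
  qed
qed

definition Kset :: "('a \<Rightarrow> int) \<Rightarrow> ('a \<Rightarrow> int) \<Rightarrow> 'a \<Rightarrow> 'a set" where
  "Kset f h g = {k \<in> carrier G. f k \<noteq> 0 \<and> h (inv k \<otimes> g) \<noteq> 0}"

lemma Kset_fin:
  assumes f: "f \<in> NC" and h: "h \<in> NC" and g: "g \<in> carrier G"
  shows "finite (Kset f h g)"
proof -
  obtain Mh where Mh: "\<And>x. h x \<noteq> 0 \<Longrightarrow> xi x \<le> Mh" using NC_bound[OF h] by blast
  have "Kset f h g \<subseteq> {k. xi g - Mh \<le> xi k \<and> f k \<noteq> 0}"
  proof
    fix k assume k: "k \<in> Kset f h g"
    then have kc: "k \<in> carrier G" and "f k \<noteq> 0" "h (inv k \<otimes> g) \<noteq> 0" by (auto simp: Kset_def)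
    then have "xi (inv k \<otimes> g) \<le> Mh" using Mh by blast
    then show "k \<in> {k. xi g - Mh \<le> xi k \<and> f k \<noteq> 0}" using \<open>f k \<noteq> 0\<close> xi_invmult[OF kc g] by auto
  qed
  thus ?thesis using NC_fin[OF f] finite_subset by blast
qed

lemma conv_eq:
  assumes f: "f \<in> NC" and g: "g \<in> carrier G" and A: "finite A" and sub: "Kset f h g \<subseteq> A"
  shows "nov_mult G f h g = (\<Sum>k\<in>A. f k * h (inv k \<otimes> g))"
proof -
  have "nov_mult G f h g = (\<Sum>k\<in>Kset f h g. f k * h (inv k \<otimes> g))"
    using g by (simp add: nov_mult_def Kset_def)
  also have "\<dots> = (\<Sum>k\<in>A. f k * h (inv k \<otimes> g))"
  proof (rule sum.mono_neutral_left[OF A sub])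
    show "\<forall>i\<in>A - Kset f h g. f i * h (inv i \<otimes> g) = 0"
      using NC_nz[OF f] by (auto simp: Kset_def)
  qed
  finally show ?thesis .
qed

lemma conv_out: "g \<notin> carrier G \<Longrightarrow> nov_mult G f h g = 0"
  by (simp add: nov_mult_def)

lemma conv_nz:
  assumes "g \<in> carrier G" "nov_mult G f h g \<noteq> 0"
  shows "\<exists>k\<in>carrier G. f k \<noteq> 0 \<and> h (inv k \<otimes> g) \<noteq> 0"
proof (rule ccontr)
  assume "\<not> ?thesis"
  then have e0: "{k \<in> carrier G. f k \<noteq> 0 \<and> h (inv k \<otimes> g) \<noteq> 0} = {}" by auto
  have e: "nov_mult G f h g = (\<Sum>k \<in> {k \<in> carrier G. f k \<noteq> 0 \<and> h (inv k \<otimes> g) \<noteq> 0}. f k * h (inv k \<otimes> g))"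
    using assms(1) unfolding nov_mult_def by simp
  have "nov_mult G f h g = 0" by (simp only: e e0 sum.empty)
  then show False using assms(2) by simp
qed

lemma conv_bound:
  assumes f: "f \<in> NC" and h: "h \<in> NC"
    and Mf: "\<And>x. f x \<noteq> 0 \<Longrightarrow> xi x \<le> Mf" and Mh: "\<And>x. h x \<noteq> 0 \<Longrightarrow> xi x \<le> Mh"
    and nz: "nov_mult G f h x \<noteq> 0"
  shows "xi x \<le> Mf + Mh"
proof -
  have x: "x \<in> carrier G" using nz conv_out by blast
  obtain k where k: "k \<in> carrier G" "f k \<noteq> 0" "h (inv k \<otimes> x) \<noteq> 0" using conv_nz[OF x nz] by blast
  have "xi x = xi k + xi (inv k \<otimes> x)" using xi_invmult[OF k(1) x] by simp
  thus ?thesis using Mf[OF k(2)] Mh[OF k(3)] by linarith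
qed

lemma conv_closed:
  assumes f: "f \<in> NC" and h: "h \<in> NC"
  shows "nov_mult G f h \<in> NC"
proof -
  obtain Mf where Mf: "\<And>x. f x \<noteq> 0 \<Longrightarrow> xi x \<le> Mf" using NC_bound[OF f] by blast
  obtain Mh where Mh: "\<And>x. h x \<noteq> 0 \<Longrightarrow> xi x \<le> Mh" using NC_bound[OF h] by blast
  have "finite {g \<in> carrier G. r \<le> xi g \<and> nov_mult G f h g \<noteq> 0}" for r
  proof -
    let ?A = "{a. r - Mh \<le> xi a \<and> f a \<noteq> 0}" and ?B = "{b. r - Mf \<le> xi b \<and> h b \<noteq> 0}"
    have "{g \<in> carrier G. r \<le> xi g \<and> nov_mult G f h g \<noteq> 0} \<subseteq> (\<lambda>(a,b). a \<otimes> b) ` (?A \<times> ?B)"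
    proof
      fix g assume "g \<in> {g \<in> carrier G. r \<le> xi g \<and> nov_mult G f h g \<noteq> 0}"
      then have g: "g \<in> carrier G" "r \<le> xi g" "nov_mult G f h g \<noteq> 0" by auto
      obtain k where k: "k \<in> carrier G" "f k \<noteq> 0" "h (inv k \<otimes> g) \<noteq> 0" using conv_nz[OF g(1) g(3)] by blast
      have e: "xi g = xi k + xi (inv k \<otimes> g)" using xi_invmult[OF k(1) g(1)] by simp
      have "k \<in> ?A" using k e g(2) Mh[OF k(3)] by auto
      moreover have "inv k \<otimes> g \<in> ?B" using k e g(2) Mf[OF k(2)] by auto
      moreover have "g = k \<otimes> (inv k \<otimes> g)" using k(1) g(1) by (simp add: m_assoc[symmetric])
      ultimately show "g \<in> (\<lambda>(a,b). a \<otimes> b) ` (?A \<times> ?B)" by force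
    qed
    moreover have "finite (?A \<times> ?B)" using NC_fin[OF f] NC_fin[OF h] by blast
    ultimately show ?thesis using finite_subset by blast
  qed
  thus ?thesis by (simp add: nov_carrier_def conv_out)
qed

lemma conv_assoc:
  assumes f: "f \<in> NC" and h: "h \<in> NC" and k: "k \<in> NC"
  shows "nov_mult G (nov_mult G f h) k = nov_mult G f (nov_mult G h k)"
proof
  fix g
  show "nov_mult G (nov_mult G f h) k g = nov_mult G f (nov_mult G h k) g"
  proof (cases "g \<in> carrier G")
    case False thus ?thesis by (simp add: conv_out)
  next
    case g: True
    obtain Mf where Mf: "\<And>x. f x \<noteq> 0 \<Longrightarrow> xi x \<le> Mf" using NC_bound[OF f] by blast
    obtain Mh where Mh: "\<And>x. h x \<noteq> 0 \<Longrightarrow> xi x \<le> Mh" using NC_bound[OF h] by blast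
    obtain Mk where Mk: "\<And>x. k x \<noteq> 0 \<Longrightarrow> xi x \<le> Mk" using NC_bound[OF k] by blast
    define A where "A = {a. xi g - Mh - Mk \<le> xi a \<and> f a \<noteq> 0}"
    define B where "B = {b. xi g - Mf - Mk \<le> xi b \<and> h b \<noteq> 0}"
    define C where "C = (\<lambda>(a,b). a \<otimes> b) ` (A \<times> B)"
    have finA: "finite A" unfolding A_def using NC_fin[OF f] .
    have finB: "finite B" unfolding B_def using NC_fin[OF h] .
    have finC: "finite C" unfolding C_def using finA finB by blast
    have Ac: "A \<subseteq> carrier G" unfolding A_def using NC_nz[OF f] by blast
    have Bc: "B \<subseteq> carrier G" unfolding B_def using NC_nz[OF h] by blast
    have Cc: "C \<subseteq> carrier G" unfolding C_def using Ac Bc by auto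
    have hk: "nov_mult G h k \<in> NC" using conv_closed[OF h k] .
    have fh: "nov_mult G f h \<in> NC" using conv_closed[OF f h] .
    have L1: "nov_mult G f (nov_mult G h k) g = (\<Sum>a\<in>A. f a * nov_mult G h k (inv a \<otimes> g))"
    proof (rule conv_eq[OF f g finA])
      show "Kset f (nov_mult G h k) g \<subseteq> A"
      proof
        fix a assume "a \<in> Kset f (nov_mult G h k) g"
        then have a: "a \<in> carrier G" "f a \<noteq> 0" "nov_mult G h k (inv a \<otimes> g) \<noteq> 0" by (auto simp: Kset_def)
        have "xi (inv a \<otimes> g) \<le> Mh + Mk" using conv_bound[OF h k Mh Mk a(3)] .
        then show "a \<in> A" using a xi_invmult[OF a(1) g] by (auto simp: A_def)
      qed
    qed
    have L2: "nov_mult G h k (inv a \<otimes> g) = (\<Sum>c\<in>C. h (inv a \<otimes> c) * k (inv c \<otimes> g))" if aA: "a \<in> A" for a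
    proof -
      have a: "a \<in> carrier G" "f a \<noteq> 0" using aA Ac by (auto simp: A_def)
      have x: "inv a \<otimes> g \<in> carrier G" using a g by simp
      have inj: "inj_on (\<lambda>c. inv a \<otimes> c) C"
        using Cc a by (intro inj_onI) (auto simp: subset_iff)
      have "nov_mult G h k (inv a \<otimes> g) = (\<Sum>b\<in>(\<lambda>c. inv a \<otimes> c) ` C. h b * k (inv b \<otimes> (inv a \<otimes> g)))"
      proof (rule conv_eq[OF h x])
        show "finite ((\<lambda>c. inv a \<otimes> c) ` C)" using finC by simp
        show "Kset h k (inv a \<otimes> g) \<subseteq> (\<lambda>c. inv a \<otimes> c) ` C"
        proof
          fix b assume "b \<in> Kset h k (inv a \<otimes> g)"
          then have b: "b \<in> carrier G" "h b \<noteq> 0" "k (inv b \<otimes> (inv a \<otimes> g)) \<noteq> 0" by (auto simp: Kset_def)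
          have "xi (inv b \<otimes> (inv a \<otimes> g)) = xi g - xi a - xi b" using b a g by (simp add: xi_hom)
          then have "b \<in> B" using Mk[OF b(3)] Mf[OF a(2)] b(2) by (auto simp: B_def)
          then have "a \<otimes> b \<in> C" using aA by (auto simp: C_def)
          moreover have "b = inv a \<otimes> (a \<otimes> b)" using a b by (simp add: m_assoc[symmetric])
          ultimately show "b \<in> (\<lambda>c. inv a \<otimes> c) ` C" by blast
        qed
      qed
      also have "\<dots> = (\<Sum>c\<in>C. h (inv a \<otimes> c) * k (inv (inv a \<otimes> c) \<otimes> (inv a \<otimes> g)))"
        by (simp add: sum.reindex[OF inj])
      also have "\<dots> = (\<Sum>c\<in>C. h (inv a \<otimes> c) * k (inv c \<otimes> g))"
      proof (rule sum.cong[OF refl])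
        fix c assume "c \<in> C"
        then have c: "c \<in> carrier G" using Cc by blast
        have "inv (inv a \<otimes> c) \<otimes> (inv a \<otimes> g) = inv c \<otimes> g"
          using a c g by (simp add: inv_mult_group m_assoc[symmetric]) (simp add: m_assoc)
        thus "h (inv a \<otimes> c) * k (inv (inv a \<otimes> c) \<otimes> (inv a \<otimes> g)) = h (inv a \<otimes> c) * k (inv c \<otimes> g)" by simp
      qed
      finally show ?thesis .
    qed
    have R1: "nov_mult G (nov_mult G f h) k g = (\<Sum>c\<in>C. nov_mult G f h c * k (inv c \<otimes> g))"
    proof (rule conv_eq[OF fh g finC])
      show "Kset (nov_mult G f h) k g \<subseteq> C"
      proof
        fix c assume "c \<in> Kset (nov_mult G f h) k g"
        then have c: "c \<in> carrier G" "nov_mult G f h c \<noteq> 0" "k (inv c \<otimes> g) \<noteq> 0" by (auto simp: Kset_def)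
        obtain a where a: "a \<in> carrier G" "f a \<noteq> 0" "h (inv a \<otimes> c) \<noteq> 0" using conv_nz[OF c(1,2)] by blast
        have e1: "xi (inv c \<otimes> g) = xi g - xi c" using xi_invmult c(1) g by simp
        have e2: "xi (inv a \<otimes> c) = xi c - xi a" using xi_invmult a(1) c(1) by simp
        have "a \<in> A" using Mk[OF c(3)] Mh[OF a(3)] e1 e2 a(2) by (auto simp: A_def)
        moreover have "inv a \<otimes> c \<in> B" using Mk[OF c(3)] Mf[OF a(2)] e1 e2 a(3) by (auto simp: B_def)
        moreover have "c = a \<otimes> (inv a \<otimes> c)" using a c by (simp add: m_assoc[symmetric])
        ultimately show "c \<in> C" unfolding C_def by force
      qed
    qed
    have R2: "nov_mult G f h c * k (inv c \<otimes> g) = (\<Sum>a\<in>A. f a * h (inv a \<otimes> c)) * k (inv c \<otimes> g)"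
      if cC: "c \<in> C" for c
    proof (cases "k (inv c \<otimes> g) = 0")
      case True thus ?thesis by simp
    next
      case False
      have c: "c \<in> carrier G" using cC Cc by blast
      have "nov_mult G f h c = (\<Sum>a\<in>A. f a * h (inv a \<otimes> c))"
      proof (rule conv_eq[OF f c finA])
        show "Kset f h c \<subseteq> A"
        proof
          fix a assume "a \<in> Kset f h c"
          then have a: "a \<in> carrier G" "f a \<noteq> 0" "h (inv a \<otimes> c) \<noteq> 0" by (auto simp: Kset_def)
          have e1: "xi (inv c \<otimes> g) = xi g - xi c" using xi_invmult c g by simp
          have e2: "xi (inv a \<otimes> c) = xi c - xi a" using xi_invmult a(1) c by simp
          show "a \<in> A" using Mk[OF False] Mh[OF a(3)] e1 e2 a(2) by (auto simp: A_def)
        qed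
      qed
      thus ?thesis by simp
    qed
    have "nov_mult G (nov_mult G f h) k g = (\<Sum>c\<in>C. (\<Sum>a\<in>A. f a * h (inv a \<otimes> c)) * k (inv c \<otimes> g))"
      using R1 R2 by simp
    also have "\<dots> = (\<Sum>c\<in>C. \<Sum>a\<in>A. f a * h (inv a \<otimes> c) * k (inv c \<otimes> g))"
      by (simp add: sum_distrib_right)
    also have "\<dots> = (\<Sum>a\<in>A. \<Sum>c\<in>C. f a * h (inv a \<otimes> c) * k (inv c \<otimes> g))"
      by (rule sum.swap)
    also have "\<dots> = (\<Sum>a\<in>A. f a * (\<Sum>c\<in>C. h (inv a \<otimes> c) * k (inv c \<otimes> g)))"
      by (simp add: sum_distrib_left mult.assoc)
    also have "\<dots> = (\<Sum>a\<in>A. f a * nov_mult G h k (inv a \<otimes> g))"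
      using L2 by simp
    also have "\<dots> = nov_mult G f (nov_mult G h k) g" using L1 by simp
    finally show ?thesis .
  qed
qed


abbreviation "R \<equiv> novikov_ring G xi"

lemma R_carrier[simp]: "carrier R = NC" and R_mult[simp]: "monoid.mult R = nov_mult G"
  and R_one: "one R = (\<lambda>g. if g = \<one> then 1 else 0)" and R_zero[simp]: "zero R = (\<lambda>_. 0)"
  and R_add[simp]: "add R = (\<lambda>f h g. f g + h g)"
  by (simp_all add: novikov_ring_def)

definition dl :: "int \<Rightarrow> 'a \<Rightarrow> 'a \<Rightarrow> int" where
  "dl s x = (\<lambda>h. if h = x then s else 0)"

lemma R_one_dl: "one R = dl 1 \<one>"
  by (simp add: R_one dl_def)

lemma dl_NC: "x \<in> carrier G \<Longrightarrow> dl s x \<in> NC"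
proof -
  assume x: "x \<in> carrier G"
  have "finite {g \<in> carrier G. r \<le> xi g \<and> dl s x g \<noteq> 0}" for r
    by (rule finite_subset[of _ "{x}"]) (auto simp: dl_def)
  thus ?thesis using x by (auto simp: nov_carrier_def dl_def)
qed

lemma add_NC: "f \<in> NC \<Longrightarrow> h \<in> NC \<Longrightarrow> (\<lambda>g. f g + h g) \<in> NC"
proof -
  assume f: "f \<in> NC" and h: "h \<in> NC"
  have "finite {g \<in> carrier G. r \<le> xi g \<and> f g + h g \<noteq> 0}" for r
    by (rule finite_subset[of _ "{g. r \<le> xi g \<and> f g \<noteq> 0} \<union> {g. r \<le> xi g \<and> h g \<noteq> 0}"])
       (use NC_fin[OF f] NC_fin[OF h] in auto)
  thus ?thesis using f h by (auto simp: nov_carrier_def)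
qed

lemma neg_NC: "f \<in> NC \<Longrightarrow> (\<lambda>g. - f g) \<in> NC"
  by (auto simp: nov_carrier_def)

lemma zero_NC: "(\<lambda>_. 0) \<in> NC"
  by (auto simp: nov_carrier_def)

lemma conv_dl_left:
  assumes x: "x \<in> carrier G" and f: "f \<in> NC"
  shows "nov_mult G (dl s x) f = (\<lambda>g. if g \<in> carrier G then s * f (inv x \<otimes> g) else 0)"
proof
  fix g show "nov_mult G (dl s x) f g = (if g \<in> carrier G then s * f (inv x \<otimes> g) else 0)"
  proof (cases "g \<in> carrier G")
    case False
    then show ?thesis by (simp add: conv_out)
  next
    case True
    have "nov_mult G (dl s x) f g = (\<Sum>k\<in>{x}. dl s x k * f (inv k \<otimes> g))"
      by (rule conv_eq[OF dl_NC[OF x] True]) (auto simp: Kset_def dl_def)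
    thus ?thesis using True by (simp add: dl_def)
  qed
qed

lemma conv_dl_right:
  assumes x: "x \<in> carrier G" and f: "f \<in> NC"
  shows "nov_mult G f (dl s x) = (\<lambda>g. if g \<in> carrier G then f (g \<otimes> inv x) * s else 0)"
proof
  fix g show "nov_mult G f (dl s x) g = (if g \<in> carrier G then f (g \<otimes> inv x) * s else 0)"
  proof (cases "g \<in> carrier G")
    case False
    then show ?thesis by (simp add: conv_out)
  next
    case True
    have "nov_mult G f (dl s x) g = (\<Sum>k\<in>{g \<otimes> inv x}. f k * dl s x (inv k \<otimes> g))"
    proof (rule conv_eq[OF f True])
      show "Kset f (dl s x) g \<subseteq> {g \<otimes> inv x}"
      proof
        fix k assume "k \<in> Kset f (dl s x) g"
        then have k: "k \<in> carrier G" "inv k \<otimes> g = x" by (auto simp: Kset_def dl_def split: if_splits)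
        then show "k \<in> {g \<otimes> inv x}" using True x
          by (simp add: inv_solve_left' inv_solve_right)
      qed
    qed simp
    also have "\<dots> = f (g \<otimes> inv x) * s"
    proof -
      have "inv (g \<otimes> inv x) \<otimes> g = x" using True x by (simp add: inv_mult_group m_assoc)
      thus ?thesis by (simp add: dl_def)
    qed
    finally show ?thesis using True by simp
  qed
qed

lemma dl_mult: "x \<in> carrier G \<Longrightarrow> y \<in> carrier G \<Longrightarrow>
    nov_mult G (dl s x) (dl t y) = dl (s * t) (x \<otimes> y)"
proof -
  assume x: "x \<in> carrier G" and y: "y \<in> carrier G"
  show ?thesis
  proof
    fix g
    show "nov_mult G (dl s x) (dl t y) g = dl (s * t) (x \<otimes> y) g"
    proof (cases "g \<in> carrier G")
      case False
      then show ?thesis using x y by (auto simp: conv_out dl_def)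
    next
      case True
      have "(inv x \<otimes> g = y) \<longleftrightarrow> (g = x \<otimes> y)" using x y True
        by (metis inv_closed inv_solve_left' m_closed)
      then show ?thesis using True x y by (simp add: conv_dl_left dl_NC) (simp add: dl_def)
    qed
  qed
qed

lemma conv_ldistr:
  assumes f: "f \<in> NC" and h: "h \<in> NC" and k: "k \<in> NC"
  shows "nov_mult G (\<lambda>g. f g + h g) k = (\<lambda>g. nov_mult G f k g + nov_mult G h k g)"
proof
  fix g show "nov_mult G (\<lambda>g. f g + h g) k g = nov_mult G f k g + nov_mult G h k g"
  proof (cases "g \<in> carrier G")
    case False thus ?thesis by (simp add: conv_out)
  next
    case g: True
    let ?A = "Kset f k g \<union> Kset h k g \<union> Kset (\<lambda>g. f g + h g) k g"
    have fin: "finite ?A" using Kset_fin[OF f k g] Kset_fin[OF h k g] Kset_fin[OF add_NC[OF f h] k g] by simp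
    show ?thesis
      apply (subst conv_eq[OF add_NC[OF f h] g fin], blast)
      apply (subst conv_eq[OF f g fin], blast)
      apply (subst conv_eq[OF h g fin], blast)
      apply (simp add: sum.distrib distrib_right)
      done
  qed
qed

lemma conv_rdistr:
  assumes f: "f \<in> NC" and h: "h \<in> NC" and k: "k \<in> NC"
  shows "nov_mult G k (\<lambda>g. f g + h g) = (\<lambda>g. nov_mult G k f g + nov_mult G k h g)"
proof
  fix g show "nov_mult G k (\<lambda>g. f g + h g) g = nov_mult G k f g + nov_mult G k h g"
  proof (cases "g \<in> carrier G")
    case False thus ?thesis by (simp add: conv_out)
  next
    case g: True
    let ?A = "Kset k f g \<union> Kset k h g \<union> Kset k (\<lambda>g. f g + h g) g"
    have fin: "finite ?A" using Kset_fin[OF k f g] Kset_fin[OF k h g] Kset_fin[OF k add_NC[OF f h] g] by simp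
    show ?thesis
      apply (subst conv_eq[OF k g fin], blast)
      apply (subst conv_eq[OF k g fin], blast)
      apply (subst conv_eq[OF k g fin], blast)
      apply (simp add: sum.distrib distrib_left)
      done
  qed
qed

lemma nov_ring: "ring R"
proof (rule ringI)
  show "abelian_group R"
  proof (rule abelian_groupI)
    fix x assume x: "x \<in> carrier R"
    show "\<exists>y\<in>carrier R. y \<oplus>\<^bsub>R\<^esub> x = \<zero>\<^bsub>R\<^esub>"
      by (rule bexI[of _ "\<lambda>g. - x g"]) (use x neg_NC in auto)
  qed (auto simp: add_NC zero_NC)
  show "monoid R"
  proof (rule monoidI)
    show "\<one>\<^bsub>R\<^esub> \<in> carrier R" by (simp add: R_one_dl dl_NC)
    fix x assume x: "x \<in> carrier R"
    show "\<one>\<^bsub>R\<^esub> \<otimes>\<^bsub>R\<^esub> x = x"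
      using x NC_out[of x] by (auto simp: R_one_dl conv_dl_left)
    show "x \<otimes>\<^bsub>R\<^esub> \<one>\<^bsub>R\<^esub> = x"
      using x NC_out[of x] by (auto simp: R_one_dl conv_dl_right)
  qed (auto simp: conv_closed conv_assoc)
qed (auto simp: conv_ldistr conv_rdistr)

end


context ring
begin

lemma finsum_swap:
  assumes "finite A" "finite B" "\<And>i j. i \<in> A \<Longrightarrow> j \<in> B \<Longrightarrow> f i j \<in> carrier R"
  shows "(\<Oplus>i\<in>A. \<Oplus>j\<in>B. f i j) = (\<Oplus>j\<in>B. \<Oplus>i\<in>A. f i j)"
  using assms
proof (induction A rule: finite_induct)
  case empty then show ?case by (simp add: finsum_zero)
next
  case (insert x F)
  have c1: "(\<lambda>i. \<Oplus>j\<in>B. f i j) \<in> F \<rightarrow> carrier R" using insert by (auto intro!: finsum_closed)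
  have "(\<Oplus>i\<in>insert x F. \<Oplus>j\<in>B. f i j) = (\<Oplus>j\<in>B. f x j) \<oplus> (\<Oplus>i\<in>F. \<Oplus>j\<in>B. f i j)"
    using insert c1 by (subst finsum_insert) (auto intro!: finsum_closed)
  also have "\<dots> = (\<Oplus>j\<in>B. f x j) \<oplus> (\<Oplus>j\<in>B. \<Oplus>i\<in>F. f i j)" using insert by simp
  also have "\<dots> = (\<Oplus>j\<in>B. f x j \<oplus> (\<Oplus>i\<in>F. f i j))"
    using insert by (subst finsum_addf) (auto intro!: finsum_closed)
  also have "\<dots> = (\<Oplus>j\<in>B. \<Oplus>i\<in>insert x F. f i j)"
    using insert by (intro finsum_cong) (auto intro!: finsum_closed)
  finally show ?case .
qed

lemma finitary_carr: "finitary R A \<Longrightarrow> A i j \<in> carrier R"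
  by (simp add: finitary_def)

lemma mat_one_carr[simp]: "mat_one R i j \<in> carrier R"
  by (simp add: mat_one_def)

lemma finitary_rowfin: "finitary R A \<Longrightarrow> finite {k. A i k \<noteq> \<zero>}"
proof -
  assume A: "finitary R A"
  let ?D = "{(i,j). A i j \<noteq> mat_one R i j}"
  have "{k. A i k \<noteq> \<zero>} \<subseteq> snd ` ?D \<union> {i}"
  proof
    fix k assume "k \<in> {k. A i k \<noteq> \<zero>}"
    then show "k \<in> snd ` ?D \<union> {i}"
      by (cases "k = i") (auto simp: mat_one_def image_iff intro!: bexI[of _ "(i,k)"])
  qed
  moreover have "finite ?D" using A by (simp add: finitary_def)
  ultimately show ?thesis by (meson finite_Un finite_imageI finite.intros finite_subset)
qed

lemma finitary_colfin: "finitary R A \<Longrightarrow> finite {k. A k j \<noteq> \<zero>}"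
proof -
  assume A: "finitary R A"
  let ?D = "{(i,j). A i j \<noteq> mat_one R i j}"
  have "{k. A k j \<noteq> \<zero>} \<subseteq> fst ` ?D \<union> {j}"
  proof
    fix k assume "k \<in> {k. A k j \<noteq> \<zero>}"
    then show "k \<in> fst ` ?D \<union> {j}"
      by (cases "k = j") (auto simp: mat_one_def image_iff intro!: bexI[of _ "(k,j)"])
  qed
  moreover have "finite ?D" using A by (simp add: finitary_def)
  ultimately show ?thesis by (meson finite_Un finite_imageI finite.intros finite_subset)
qed

lemma mm_eq:
  assumes "finite K" "{k. A i k \<noteq> \<zero>} \<subseteq> K" "\<And>k. A i k \<in> carrier R" "\<And>k. B k j \<in> carrier R"
  shows "mat_mult R A B i j = (\<Oplus>k\<in>K. A i k \<otimes> B k j)"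
  unfolding mat_mult_def
  by (rule add.finprod_mono_neutral_cong_left) (use assms in auto)

lemma mm_carr: "finitary R A \<Longrightarrow> (\<And>k. B k j \<in> carrier R) \<Longrightarrow> mat_mult R A B i j \<in> carrier R"
  unfolding mat_mult_def by (auto intro!: finsum_closed simp: finitary_carr)

lemma mm_rowdiag:
  assumes "\<And>k. k \<noteq> i \<Longrightarrow> A i k = \<zero>" "A i i \<in> carrier R" "\<And>k. B k j \<in> carrier R"
  shows "mat_mult R A B i j = A i i \<otimes> B i j"
proof -
  have c: "A i k \<in> carrier R" for k using assms by (cases "k = i") auto
  have "mat_mult R A B i j = (\<Oplus>k\<in>{i}. A i k \<otimes> B k j)"
    by (rule mm_eq) (use assms c in auto)
  thus ?thesis using assms by simp
qed

lemma mm_coldiag: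
  assumes A: "finitary R A" and "\<And>k. k \<noteq> j \<Longrightarrow> B k j = \<zero>" "\<And>k. B k j \<in> carrier R"
  shows "mat_mult R A B i j = A i j \<otimes> B j j"
proof -
  have f: "finite ({k. A i k \<noteq> \<zero>} \<union> {j})" using finitary_rowfin[OF A] by simp
  have "mat_mult R A B i j = (\<Oplus>k\<in>{k. A i k \<noteq> \<zero>} \<union> {j}. A i k \<otimes> B k j)"
    by (rule mm_eq[OF f]) (use assms finitary_carr[OF A] in auto)
  also have "\<dots> = (\<Oplus>k\<in>{j}. A i k \<otimes> B k j)"
    by (rule add.finprod_mono_neutral_cong_right[OF f]) (use assms finitary_carr[OF A] in auto)
  finally show ?thesis using assms finitary_carr[OF A] by simp
qed

lemma mat_one_finitary[simp]: "finitary R (mat_one R)"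
  by (simp add: finitary_def)

lemma mm_one_left: "(\<And>i j. B i j \<in> carrier R) \<Longrightarrow> mat_mult R (mat_one R) B = B"
  by (intro ext, subst mm_rowdiag) (auto simp: mat_one_def)

lemma mm_one_right: "finitary R A \<Longrightarrow> mat_mult R A (mat_one R) = A"
  by (intro ext, subst mm_coldiag) (auto simp: mat_one_def finitary_carr)

lemma mm_finitary:
  assumes A: "finitary R A" and B: "finitary R B"
  shows "finitary R (mat_mult R A B)"
proof -
  let ?DA = "{(i,j). A i j \<noteq> mat_one R i j}" and ?DB = "{(i,j). B i j \<noteq> mat_one R i j}"
  have fA: "finite ?DA" and fB: "finite ?DB" using A B by (auto simp: finitary_def)
  have key: "(i,j) \<in> ?DA \<union> ?DB"
    if ne: "mat_mult R A B i j \<noteq> mat_one R i j" and nin: "(i, j) \<notin> fst ` ?DA \<times> snd ` ?DB" for i j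
  proof (cases "i \<in> fst ` ?DA")
    case False
    then have row: "A i k = mat_one R i k" for k by (force simp: image_iff)
    have "mat_mult R A B i j = B i j"
      by (subst mm_rowdiag) (use row B in \<open>auto simp: mat_one_def finitary_carr\<close>)
    then show ?thesis using ne by auto
  next
    case True
    then have "j \<notin> snd ` ?DB" using nin by auto
    then have col: "B k j = mat_one R k j" for k by (force simp: image_iff)
    have "mat_mult R A B i j = A i j"
      by (subst mm_coldiag[OF A]) (use col B in \<open>auto simp: mat_one_def finitary_carr A\<close>)
    then show ?thesis using ne by auto
  qed
  have "{(i,j). mat_mult R A B i j \<noteq> mat_one R i j} \<subseteq> ?DA \<union> ?DB \<union> (fst ` ?DA \<times> snd ` ?DB)"
    using key by blast
  moreover have "finite (?DA \<union> ?DB \<union> (fst ` ?DA \<times> snd ` ?DB))" using fA fB by auto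
  ultimately show ?thesis
    using finite_subset mm_carr[OF A] finitary_carr[OF B] by (auto simp: finitary_def)
qed

lemma mm_assoc:
  assumes A: "finitary R A" and B: "finitary R B" and C: "finitary R C"
  shows "mat_mult R (mat_mult R A B) C = mat_mult R A (mat_mult R B C)"
proof (intro ext)
  fix i j
  define La where "La = {l. A i l \<noteq> \<zero>}"
  define K where "K = (\<Union>l\<in>La. {k. B l k \<noteq> \<zero>}) \<union> {k. mat_mult R A B i k \<noteq> \<zero>}"
  have fLa: "finite La" unfolding La_def using finitary_rowfin[OF A] .
  have fK: "finite K" unfolding K_def using fLa finitary_rowfin[OF B] finitary_rowfin[OF mm_finitary[OF A B]] by auto
  note cA = finitary_carr[OF A] and cB = finitary_carr[OF B] and cC = finitary_carr[OF C]
  have AB: "mat_mult R A B i k = (\<Oplus>l\<in>La. A i l \<otimes> B l k)" for k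
    by (rule mm_eq) (use fLa cA cB in \<open>auto simp: La_def\<close>)
  have BC: "mat_mult R B C l j = (\<Oplus>k\<in>K. B l k \<otimes> C k j)" if "l \<in> La" for l
    by (rule mm_eq) (use fK cB cC that in \<open>auto simp: K_def\<close>)
  have "mat_mult R (mat_mult R A B) C i j = (\<Oplus>k\<in>K. mat_mult R A B i k \<otimes> C k j)"
    by (rule mm_eq) (use fK cC mm_carr[OF A] cB in \<open>auto simp: K_def\<close>)
  also have "\<dots> = (\<Oplus>k\<in>K. (\<Oplus>l\<in>La. A i l \<otimes> B l k) \<otimes> C k j)" by (simp add: AB)
  also have "\<dots> = (\<Oplus>k\<in>K. \<Oplus>l\<in>La. A i l \<otimes> B l k \<otimes> C k j)"
    by (intro finsum_cong refl) (use fLa cA cB cC in \<open>auto simp: finsum_ldistr intro!: finsum_closed\<close>)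
  also have "\<dots> = (\<Oplus>l\<in>La. \<Oplus>k\<in>K. A i l \<otimes> B l k \<otimes> C k j)"
    by (rule finsum_swap) (use fLa fK cA cB cC in auto)
  also have "\<dots> = (\<Oplus>l\<in>La. A i l \<otimes> (\<Oplus>k\<in>K. B l k \<otimes> C k j))"
    by (intro finsum_cong refl) (use fK cA cB cC in \<open>auto simp: finsum_rdistr m_assoc intro!: finsum_closed\<close>)
  also have "\<dots> = (\<Oplus>l\<in>La. A i l \<otimes> mat_mult R B C l j)"
    by (intro finsum_cong refl) (use BC cA cB cC fK in \<open>auto intro!: finsum_closed\<close>)
  also have "\<dots> = mat_mult R A (mat_mult R B C) i j"
    by (rule mm_eq[symmetric]) (use fLa cA mm_carr[OF B] cC in \<open>auto simp: La_def\<close>)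
  finally show "mat_mult R (mat_mult R A B) C i j = mat_mult R A (mat_mult R B C) i j" .
qed

lemma GL_carrier: "carrier (GL R) = {A. finitary R A \<and> (\<exists>B. finitary R B \<and>
              mat_mult R A B = mat_one R \<and> mat_mult R B A = mat_one R)}"
  and GL_mult[simp]: "monoid.mult (GL R) = mat_mult R" and GL_one[simp]: "one (GL R) = mat_one R"
  by (simp_all add: GL_def)

lemma GL_monoid: "monoid (GL R)"
proof (rule monoidI)
  fix x y assume x: "x \<in> carrier (GL R)" and y: "y \<in> carrier (GL R)"
  from x obtain x' where x': "finitary R x" "finitary R x'" "mat_mult R x x' = mat_one R" "mat_mult R x' x = mat_one R"
    by (auto simp: GL_carrier)
  from y obtain y' where y': "finitary R y" "finitary R y'" "mat_mult R y y' = mat_one R" "mat_mult R y' y = mat_one R"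
    by (auto simp: GL_carrier)
  have "mat_mult R (mat_mult R x y) (mat_mult R y' x') = mat_one R"
    using x' y' by (simp add: mm_assoc mm_finitary mm_one_left finitary_carr flip: mm_assoc[of y y' x'])
  moreover have "mat_mult R (mat_mult R y' x') (mat_mult R x y) = mat_one R"
    using x' y' by (simp add: mm_assoc mm_finitary mm_one_left finitary_carr flip: mm_assoc[of x' x y])
  ultimately show "x \<otimes>\<^bsub>GL R\<^esub> y \<in> carrier (GL R)"
    using x' y' by (auto simp: GL_carrier mm_finitary intro!: exI[of _ "mat_mult R y' x'"] mm_finitary)
next
  show "\<one>\<^bsub>GL R\<^esub> \<in> carrier (GL R)"
    by (auto simp: GL_carrier intro!: exI[of _ "mat_one R"] simp: mm_one_left)
qed (auto simp: GL_carrier mm_assoc mm_one_left mm_one_right finitary_carr)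

lemma GL_group: "group (GL R)"
proof -
  interpret M: monoid "GL R" by (rule GL_monoid)
  show ?thesis
  proof (rule M.group_l_invI)
    fix x assume x: "x \<in> carrier (GL R)"
    then obtain x' where x': "finitary R x" "finitary R x'" "mat_mult R x x' = mat_one R" "mat_mult R x' x = mat_one R"
      by (auto simp: GL_carrier)
    show "\<exists>y\<in>carrier (GL R). y \<otimes>\<^bsub>GL R\<^esub> x = \<one>\<^bsub>GL R\<^esub>"
      using x' by (auto simp: GL_carrier intro!: bexI[of _ x'])
  qed
qed

end


context ring
begin

lemma elem_apply: "elem_mat R i j r l m = (if l = i \<and> m = j then r else mat_one R l m)"
  by (simp add: elem_mat_def)

lemma elem_finitary: "r \<in> carrier R \<Longrightarrow> finitary R (elem_mat R i j r)"
proof -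
  assume r: "r \<in> carrier R"
  have "{(l,m). elem_mat R i j r l m \<noteq> mat_one R l m} \<subseteq> {(i,j)}" by (auto simp: elem_apply)
  then have "finite {(l,m). elem_mat R i j r l m \<noteq> mat_one R l m}" by (rule finite_subset) simp
  thus ?thesis using r by (simp add: finitary_def elem_apply)
qed

lemma elem_row:
  assumes ij: "i \<noteq> j" and r: "r \<in> carrier R" and B: "\<And>l m. B l m \<in> carrier R"
  shows "mat_mult R (elem_mat R i j r) B l m = (if l = i then B i m \<oplus> r \<otimes> B j m else B l m)"
proof (cases "l = i")
  case False
  have "mat_mult R (elem_mat R i j r) B l m = elem_mat R i j r l l \<otimes> B l m"
    by (rule mm_rowdiag) (use False B in \<open>auto simp: elem_apply mat_one_def\<close>)
  thus ?thesis using False B by (simp add: elem_apply mat_one_def)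
next
  case True
  have "mat_mult R (elem_mat R i j r) B l m = (\<Oplus>k\<in>{i,j}. elem_mat R i j r l k \<otimes> B k m)"
    by (rule mm_eq) (use True B r in \<open>auto simp: elem_apply mat_one_def\<close>)
  also have "\<dots> = B i m \<oplus> r \<otimes> B j m"
    using True ij r B by (simp add: elem_apply mat_one_def finsum_insert)
  finally show ?thesis using True by simp
qed

lemma elem_add:
  assumes ij: "i \<noteq> j" and r: "r \<in> carrier R" and s: "s \<in> carrier R"
  shows "mat_mult R (elem_mat R i j r) (elem_mat R i j s) = elem_mat R i j (r \<oplus> s)"
proof (intro ext)
  fix l m
  have c: "elem_mat R i j s l m \<in> carrier R" for l m using finitary_carr[OF elem_finitary[OF s]] .
  show "mat_mult R (elem_mat R i j r) (elem_mat R i j s) l m = elem_mat R i j (r \<oplus> s) l m"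
    using ij r s by (simp add: elem_row[OF ij r c] elem_apply mat_one_def a_comm)
qed

lemma elem_zero: "i \<noteq> j \<Longrightarrow> elem_mat R i j \<zero> = mat_one R"
  by (auto simp: elem_apply mat_one_def intro!: ext)

lemma elem_GL: "i \<noteq> j \<Longrightarrow> r \<in> carrier R \<Longrightarrow> elem_mat R i j r \<in> carrier (GL R)"
  unfolding GL_carrier
  by (auto simp: elem_finitary elem_add elem_zero r_neg l_neg intro!: exI[of _ "elem_mat R i j (\<ominus> r)"])

lemma inv_elem: "i \<noteq> j \<Longrightarrow> r \<in> carrier R \<Longrightarrow> inv\<^bsub>GL R\<^esub> (elem_mat R i j r) = elem_mat R i j (\<ominus> r)"
  using group.inv_equality[OF GL_group, of "elem_mat R i j (\<ominus> r)" "elem_mat R i j r"]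
  by (simp add: elem_add elem_zero elem_GL r_neg l_neg)

lemma EL_gens: "{elem_mat R i j r | i j r. i \<noteq> j \<and> r \<in> carrier R} \<subseteq> carrier (GL R)"
  using elem_GL by blast

lemma EL_subgroup: "subgroup (EL R) (GL R)"
  unfolding EL_def by (rule group.generate_is_subgroup[OF GL_group EL_gens])

lemma EL_GL: "E \<in> EL R \<Longrightarrow> E \<in> carrier (GL R)"
  using subgroup.subset[OF EL_subgroup] by blast

lemma GL_finitary: "E \<in> carrier (GL R) \<Longrightarrow> finitary R E"
  by (simp add: GL_carrier)

lemma EL_finitary: "E \<in> EL R \<Longrightarrow> finitary R E"
  using EL_GL GL_finitary by blast

lemma elem_EL: "i \<noteq> j \<Longrightarrow> r \<in> carrier R \<Longrightarrow> elem_mat R i j r \<in> EL R"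
  unfolding EL_def by (rule generate.incl) blast

lemma EL_mult: "E \<in> EL R \<Longrightarrow> F \<in> EL R \<Longrightarrow> mat_mult R E F \<in> EL R"
  using subgroup.m_closed[OF EL_subgroup] by fastforce

lemma EL_one: "mat_one R \<in> EL R"
  using subgroup.one_closed[OF EL_subgroup] by simp

lemma EL_inv: "E \<in> EL R \<Longrightarrow> inv\<^bsub>GL R\<^esub> E \<in> EL R"
  using subgroup.m_inv_closed[OF EL_subgroup] by blast

definition dg :: "'a \<Rightarrow> nat \<Rightarrow> 'a" where "dg u l = (if l = 0 then u else \<one>)"

lemma dg_carr: "u \<in> carrier R \<Longrightarrow> dg u l \<in> carrier R" by (simp add: dg_def)

lemma embed1_apply: "embed1 R u l m = (if l = m then dg u l else \<zero>)"
  by (simp add: embed1_def dg_def mat_one_def)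

lemma embed1_finitary: "u \<in> carrier R \<Longrightarrow> finitary R (embed1 R u)"
proof -
  assume u: "u \<in> carrier R"
  have "{(l,m). embed1 R u l m \<noteq> mat_one R l m} \<subseteq> {(0,0)}" by (auto simp: embed1_apply mat_one_def dg_def)
  then have "finite {(l,m). embed1 R u l m \<noteq> mat_one R l m}" by (rule finite_subset) simp
  thus ?thesis using u by (simp add: finitary_def embed1_apply dg_def)
qed

lemma embed1_left: "u \<in> carrier R \<Longrightarrow> (\<And>l m. B l m \<in> carrier R) \<Longrightarrow>
    mat_mult R (embed1 R u) B l m = dg u l \<otimes> B l m"
  by (subst mm_rowdiag) (auto simp: embed1_apply dg_carr)

lemma embed1_right: "u \<in> carrier R \<Longrightarrow> finitary R A \<Longrightarrow>
    mat_mult R A (embed1 R u) l m = A l m \<otimes> dg u m"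
  by (subst mm_coldiag) (auto simp: embed1_apply dg_carr)

lemma embed1_mult: "u \<in> carrier R \<Longrightarrow> v \<in> carrier R \<Longrightarrow>
    mat_mult R (embed1 R u) (embed1 R v) = embed1 R (u \<otimes> v)"
  by (intro ext) (auto simp: embed1_left embed1_apply dg_def dg_carr)

lemma embed1_one: "embed1 R \<one> = mat_one R"
  by (intro ext) (simp add: embed1_apply dg_def mat_one_def)

lemma conj_elem:
  assumes u: "u \<in> carrier R" and u': "u' \<in> carrier R" and uu: "u \<otimes> u' = \<one>"
    and ij: "i \<noteq> j" and r: "r \<in> carrier R"
  shows "mat_mult R (mat_mult R (embed1 R u) (elem_mat R i j r)) (embed1 R u') =
         elem_mat R i j (dg u i \<otimes> r \<otimes> dg u' j)"
proof (intro ext)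
  fix l m
  have c: "elem_mat R i j r l m \<in> carrier R" for l m using finitary_carr[OF elem_finitary[OF r]] .
  have f: "finitary R (mat_mult R (embed1 R u) (elem_mat R i j r))"
    using mm_finitary embed1_finitary elem_finitary u r by blast
  show "mat_mult R (mat_mult R (embed1 R u) (elem_mat R i j r)) (embed1 R u') l m =
         elem_mat R i j (dg u i \<otimes> r \<otimes> dg u' j) l m"
    using u u' uu ij r
    by (auto simp: embed1_right[OF u' f] embed1_left[OF u c] elem_apply mat_one_def dg_def)
qed

lemma conj_EL:
  assumes u: "u \<in> carrier R" and u': "u' \<in> carrier R" and uu: "u \<otimes> u' = \<one>" and uu': "u' \<otimes> u = \<one>"
    and E: "E \<in> EL R"
  shows "mat_mult R (mat_mult R (embed1 R u) E) (embed1 R u') \<in> EL R"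
  using E unfolding EL_def
proof (induction E rule: generate.induct)
  case one
  show ?case using u u' uu by (simp add: mm_one_right embed1_finitary embed1_mult embed1_one EL_one[unfolded EL_def])
next
  case (incl h)
  then obtain i j r where h: "h = elem_mat R i j r" "i \<noteq> j" "r \<in> carrier R" by blast
  show ?case using h conj_elem[OF u u' uu h(2,3)] elem_EL[of i j, unfolded EL_def] u u'
    by (simp add: dg_carr)
next
  case (inv h)
  then obtain i j r where h: "h = elem_mat R i j r" "i \<noteq> j" "r \<in> carrier R" by blast
  show ?case using h conj_elem[OF u u' uu h(2), of "\<ominus> r"] elem_EL[of i j, unfolded EL_def] u u'
    by (simp add: dg_carr inv_elem)
next
  case (eng h1 h2)
  have f1: "finitary R h1" and f2: "finitary R h2"
    using eng.hyps EL_finitary unfolding EL_def by auto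
  note fu = embed1_finitary[OF u] and fu' = embed1_finitary[OF u']
  have "mat_mult R (mat_mult R (embed1 R u) (h1 \<otimes>\<^bsub>GL R\<^esub> h2)) (embed1 R u') =
    mat_mult R (mat_mult R (mat_mult R (embed1 R u) h1) (embed1 R u')) (mat_mult R (mat_mult R (embed1 R u) h2) (embed1 R u'))"
  proof -
    have "mat_mult R (mat_mult R (mat_mult R (embed1 R u) h1) (embed1 R u')) (mat_mult R (mat_mult R (embed1 R u) h2) (embed1 R u'))
      = mat_mult R (embed1 R u) (mat_mult R h1 (mat_mult R (mat_mult R (embed1 R u') (embed1 R u)) (mat_mult R h2 (embed1 R u'))))"
      using f1 f2 fu fu' by (simp add: mm_assoc mm_finitary)
    also have "\<dots> = mat_mult R (embed1 R u) (mat_mult R h1 (mat_mult R h2 (embed1 R u')))"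
      using u u' uu' f2 fu' by (simp add: embed1_mult embed1_one mm_one_left finitary_carr mm_finitary)
    also have "\<dots> = mat_mult R (mat_mult R (embed1 R u) (mat_mult R h1 h2)) (embed1 R u')"
      using f1 f2 fu fu' by (simp add: mm_assoc mm_finitary)
    finally show ?thesis by simp
  qed
  then show ?case using eng.IH EL_mult[unfolded EL_def] by simp
qed


end


context ring
begin

subsection \<open>2x2 blocks and the Whitehead lemma\<close>

definition blk :: "'a \<Rightarrow> 'a \<Rightarrow> 'a \<Rightarrow> 'a \<Rightarrow> nat \<Rightarrow> nat \<Rightarrow> 'a" where
  "blk a b c d l m = (if l = 0 \<and> m = 0 then a else if l = 0 \<and> m = 1 then b else
      if l = 1 \<and> m = 0 then c else if l = 1 \<and> m = 1 then d else mat_one R l m)"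

lemma blk_carr: "a \<in> carrier R \<Longrightarrow> b \<in> carrier R \<Longrightarrow> c \<in> carrier R \<Longrightarrow> d \<in> carrier R \<Longrightarrow>
   blk a b c d l m \<in> carrier R"
  by (simp add: blk_def)

lemma blk_mult:
  assumes c: "a \<in> carrier R" "b \<in> carrier R" "c \<in> carrier R" "d \<in> carrier R"
     "a' \<in> carrier R" "b' \<in> carrier R" "c' \<in> carrier R" "d' \<in> carrier R"
  shows "mat_mult R (blk a b c d) (blk a' b' c' d') =
     blk (a \<otimes> a' \<oplus> b \<otimes> c') (a \<otimes> b' \<oplus> b \<otimes> d') (c \<otimes> a' \<oplus> d \<otimes> c') (c \<otimes> b' \<oplus> d \<otimes> d')"
proof (intro ext)
  fix l m
  have cB: "blk a' b' c' d' k m \<in> carrier R" for k m using c by (simp add: blk_carr)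
  have cA: "blk a b c d l k \<in> carrier R" for k using c by (simp add: blk_carr)
  show "mat_mult R (blk a b c d) (blk a' b' c' d') l m =
     blk (a \<otimes> a' \<oplus> b \<otimes> c') (a \<otimes> b' \<oplus> b \<otimes> d') (c \<otimes> a' \<oplus> d \<otimes> c') (c \<otimes> b' \<oplus> d \<otimes> d') l m"
  proof (cases "l < 2")
    case False
    have "mat_mult R (blk a b c d) (blk a' b' c' d') l m = blk a b c d l l \<otimes> blk a' b' c' d' l m"
      by (rule mm_rowdiag) (use False cB in \<open>auto simp: blk_def mat_one_def\<close>)
    thus ?thesis using False cB by (simp add: blk_def mat_one_def)
  next
    case True
    have "mat_mult R (blk a b c d) (blk a' b' c' d') l m = (\<Oplus>k\<in>{0,1}. blk a b c d l k \<otimes> blk a' b' c' d' k m)"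
      by (rule mm_eq) (use True cA cB in \<open>auto simp: blk_def mat_one_def\<close>)
    also have "\<dots> = blk a b c d l 0 \<otimes> blk a' b' c' d' 0 m \<oplus> blk a b c d l 1 \<otimes> blk a' b' c' d' 1 m"
      using cA cB by (simp add: finsum_insert)
    finally have eq: "mat_mult R (blk a b c d) (blk a' b' c' d') l m = blk a b c d l 0 \<otimes> blk a' b' c' d' 0 m \<oplus> blk a b c d l 1 \<otimes> blk a' b' c' d' 1 m" .
    have l01: "l = 0 \<or> l = 1" using True by auto
    consider "m = 0" | "m = 1" | "m \<ge> 2" by linarith
    then show ?thesis
    proof cases
      case 1 then show ?thesis using l01 eq by (elim disjE) (simp_all add: blk_def)
    next
      case 2 then show ?thesis using l01 eq by (elim disjE) (simp_all add: blk_def)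
    next
      case 3 then show ?thesis using l01 eq c by (elim disjE) (simp_all add: blk_def mat_one_def)
    qed
  qed
qed

lemma elem01_blk: "elem_mat R 0 1 r = blk \<one> r \<zero> \<one>"
  by (intro ext) (auto simp: elem_apply blk_def mat_one_def)

lemma elem10_blk: "elem_mat R 1 0 r = blk \<one> \<zero> r \<one>"
  by (intro ext) (auto simp: elem_apply blk_def mat_one_def)

lemma embed1_blk: "embed1 R u = blk u \<zero> \<zero> \<one>"
  by (intro ext) (auto simp: embed1_apply blk_def mat_one_def dg_def)

lemma blk_diag_EL:
  assumes a: "a \<in> carrier R" and a': "a' \<in> carrier R" and aa: "a \<otimes> a' = \<one>" and aa': "a' \<otimes> a = \<one>"
  shows "blk a \<zero> \<zero> a' \<in> EL R"
proof -
  have w1: "mat_mult R (mat_mult R (elem_mat R 0 1 a) (elem_mat R 1 0 (\<ominus> a'))) (elem_mat R 0 1 a)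
      = blk \<zero> a (\<ominus> a') \<zero>"
    unfolding elem01_blk elem10_blk using a a' aa aa' by (simp add: blk_mult r_minus l_minus r_neg l_neg)
  have w2: "mat_mult R (mat_mult R (elem_mat R 0 1 (\<ominus> \<one>)) (elem_mat R 1 0 \<one>)) (elem_mat R 0 1 (\<ominus> \<one>))
      = blk \<zero> (\<ominus> \<one>) \<one> \<zero>"
    unfolding elem01_blk elem10_blk by (simp add: blk_mult r_minus l_minus r_neg l_neg)
  have "mat_mult R (blk \<zero> a (\<ominus> a') \<zero>) (blk \<zero> (\<ominus> \<one>) \<one> \<zero>) = blk a \<zero> \<zero> a'"
    using a a' by (simp add: blk_mult r_minus l_minus minus_minus)
  moreover have "blk \<zero> a (\<ominus> a') \<zero> \<in> EL R"
    unfolding w1[symmetric] using a a' by (intro EL_mult elem_EL) auto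
  moreover have "blk \<zero> (\<ominus> \<one>) \<one> \<zero> \<in> EL R"
    unfolding w2[symmetric] by (intro EL_mult elem_EL) auto
  ultimately show ?thesis using EL_mult by metis
qed

lemma whitehead:
  assumes u: "u \<in> carrier R" and u': "u' \<in> carrier R" and uu: "u \<otimes> u' = \<one>" and uu': "u' \<otimes> u = \<one>"
    and v: "v \<in> carrier R" and v': "v' \<in> carrier R" and vv: "v \<otimes> v' = \<one>" and vv': "v' \<otimes> v = \<one>"
  shows "embed1 R (u \<otimes> v \<otimes> u' \<otimes> v') \<in> EL R"
proof -
  have h1: "blk u \<zero> \<zero> u' \<in> EL R" by (rule blk_diag_EL[OF u u' uu uu'])
  have h2: "blk v \<zero> \<zero> v' \<in> EL R" by (rule blk_diag_EL[OF v v' vv vv'])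
  have e1: "(u' \<otimes> v') \<otimes> (v \<otimes> u) = \<one>" using u u' v v' vv' uu'
    by (simp add: m_assoc[symmetric]) (simp add: m_assoc)
  have e2: "(v \<otimes> u) \<otimes> (u' \<otimes> v') = \<one>" using u u' v v' vv uu
    by (simp add: m_assoc[symmetric]) (simp add: m_assoc)
  have h3: "blk (u' \<otimes> v') \<zero> \<zero> (v \<otimes> u) \<in> EL R" by (rule blk_diag_EL) (use u u' v v' e1 e2 in auto)
  have "mat_mult R (mat_mult R (blk u \<zero> \<zero> u') (blk v \<zero> \<zero> v')) (blk (u' \<otimes> v') \<zero> \<zero> (v \<otimes> u))
     = blk (u \<otimes> v \<otimes> (u' \<otimes> v')) \<zero> \<zero> (u' \<otimes> v' \<otimes> (v \<otimes> u))"
    using u u' v v' by (simp add: blk_mult)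
  also have "\<dots> = embed1 R (u \<otimes> v \<otimes> u' \<otimes> v')"
    using u u' v v' e1 by (simp add: embed1_blk m_assoc)
  finally show ?thesis using h1 h2 h3 EL_mult by metis
qed

lemma rcos_iff: "x \<in> H #>\<^bsub>GL R\<^esub> a \<longleftrightarrow> (\<exists>h\<in>H. x = mat_mult R h a)"
  by (auto simp: r_coset_def)

lemma smult_iff: "x \<in> H <#>\<^bsub>GL R\<^esub> K \<longleftrightarrow> (\<exists>h\<in>H. \<exists>k\<in>K. x = mat_mult R h k)"
  by (auto simp: set_mult_def)

lemma cos_mem: "finitary R X \<Longrightarrow> X \<in> EL R #>\<^bsub>GL R\<^esub> X"
  unfolding rcos_iff using EL_one mm_one_left finitary_carr by metis

lemma cos_eq_mem: "finitary R X \<Longrightarrow> EL R #>\<^bsub>GL R\<^esub> X = EL R #>\<^bsub>GL R\<^esub> Z \<Longrightarrow>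
   \<exists>E\<in>EL R. X = mat_mult R E Z"
proof -
  assume X: "finitary R X" and eq: "EL R #>\<^bsub>GL R\<^esub> X = EL R #>\<^bsub>GL R\<^esub> Z"
  have "X \<in> EL R #>\<^bsub>GL R\<^esub> Z" using cos_mem[OF X] eq by simp
  thus ?thesis unfolding rcos_iff .
qed

lemma cos_absorb:
  assumes E: "E \<in> EL R" and Z: "finitary R Z"
  shows "EL R #>\<^bsub>GL R\<^esub> (mat_mult R E Z) = EL R #>\<^bsub>GL R\<^esub> Z"
proof -
  interpret GLG: group "GL R" by (rule GL_group)
  have fE: "finitary R E" using E EL_finitary by blast
  let ?Ei = "inv\<^bsub>GL R\<^esub> E"
  have Ei: "?Ei \<in> EL R" using EL_inv[OF E] .
  have fEi: "finitary R ?Ei" using Ei EL_finitary by blast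
  have EiE: "mat_mult R ?Ei E = mat_one R" using GLG.l_inv[OF EL_GL[OF E]] by simp
  show ?thesis
  proof (intro equalityI subsetI)
    fix x assume "x \<in> EL R #>\<^bsub>GL R\<^esub> (mat_mult R E Z)"
    then obtain e where e: "e \<in> EL R" and x: "x = mat_mult R e (mat_mult R E Z)" unfolding rcos_iff by blast
    have fe: "finitary R e" using e EL_finitary by blast
    have "x = mat_mult R (mat_mult R e E) Z"
      using x fe fE Z by (simp add: mm_assoc)
    thus "x \<in> EL R #>\<^bsub>GL R\<^esub> Z" unfolding rcos_iff using EL_mult[OF e E] by blast
  next
    fix x assume "x \<in> EL R #>\<^bsub>GL R\<^esub> Z"
    then obtain e where e: "e \<in> EL R" and x: "x = mat_mult R e Z" unfolding rcos_iff by blast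
    have fe: "finitary R e" using e EL_finitary by blast
    have "mat_mult R (mat_mult R e ?Ei) (mat_mult R E Z) = mat_mult R e (mat_mult R (mat_mult R ?Ei E) Z)"
      using fe fE fEi Z by (simp add: mm_assoc mm_finitary)
    also have "\<dots> = x" using EiE Z x by (simp add: mm_one_left finitary_carr)
    finally show "x \<in> EL R #>\<^bsub>GL R\<^esub> (mat_mult R E Z)"
      unfolding rcos_iff using EL_mult[OF e Ei] by metis
  qed
qed

lemma cos_EL_mult:
  assumes Z: "finitary R Z"
  shows "EL R <#>\<^bsub>GL R\<^esub> (EL R #>\<^bsub>GL R\<^esub> Z) = EL R #>\<^bsub>GL R\<^esub> Z"
proof (intro equalityI subsetI)
  fix x assume "x \<in> EL R <#>\<^bsub>GL R\<^esub> (EL R #>\<^bsub>GL R\<^esub> Z)"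
  then obtain e1 k where e1: "e1 \<in> EL R" and k: "k \<in> EL R #>\<^bsub>GL R\<^esub> Z" and x0: "x = mat_mult R e1 k"
    unfolding smult_iff by blast
  from k obtain e2 where e2: "e2 \<in> EL R" and k2: "k = mat_mult R e2 Z" unfolding rcos_iff by blast
  have x: "x = mat_mult R e1 (mat_mult R e2 Z)" using x0 k2 by simp
  have "x = mat_mult R (mat_mult R e1 e2) Z"
    using x e1 e2 Z EL_finitary by (simp add: mm_assoc)
  thus "x \<in> EL R #>\<^bsub>GL R\<^esub> Z" unfolding rcos_iff using EL_mult[OF e1 e2] by blast
next
  fix x assume "x \<in> EL R #>\<^bsub>GL R\<^esub> Z"
  then obtain e where e: "e \<in> EL R" and x: "x = mat_mult R e Z" unfolding rcos_iff by blast
  have "x = mat_mult R (mat_one R) (mat_mult R e Z)"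
    using x e Z EL_finitary by (simp add: mm_one_left mm_carr finitary_carr)
  moreover have "mat_mult R e Z \<in> EL R #>\<^bsub>GL R\<^esub> Z" unfolding rcos_iff using e by blast
  ultimately show "x \<in> EL R <#>\<^bsub>GL R\<^esub> (EL R #>\<^bsub>GL R\<^esub> Z)"
    unfolding smult_iff using EL_one by blast
qed

lemma cos_diag_mult:
  assumes u: "u \<in> carrier R" and u': "u' \<in> carrier R" and uu: "u \<otimes> u' = \<one>" and uu': "u' \<otimes> u = \<one>"
    and B: "finitary R B"
  shows "(EL R #>\<^bsub>GL R\<^esub> embed1 R u) <#>\<^bsub>GL R\<^esub> (EL R #>\<^bsub>GL R\<^esub> B) =
         EL R #>\<^bsub>GL R\<^esub> (mat_mult R (embed1 R u) B)"
proof (intro equalityI subsetI)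
  fix x assume "x \<in> (EL R #>\<^bsub>GL R\<^esub> embed1 R u) <#>\<^bsub>GL R\<^esub> (EL R #>\<^bsub>GL R\<^esub> B)"
  then obtain h k where h: "h \<in> EL R #>\<^bsub>GL R\<^esub> embed1 R u" and k: "k \<in> EL R #>\<^bsub>GL R\<^esub> B"
    and x0: "x = mat_mult R h k"
    unfolding smult_iff by blast
  from h obtain e1 where e1: "e1 \<in> EL R" and h1: "h = mat_mult R e1 (embed1 R u)" unfolding rcos_iff by blast
  from k obtain e2 where e2: "e2 \<in> EL R" and k2: "k = mat_mult R e2 B" unfolding rcos_iff by blast
  have x: "x = mat_mult R (mat_mult R e1 (embed1 R u)) (mat_mult R e2 B)" using x0 h1 k2 by simp
  note fu = embed1_finitary[OF u] and fu' = embed1_finitary[OF u']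
  have f1: "finitary R e1" and f2: "finitary R e2" using e1 e2 EL_finitary by auto
  define c where "c = mat_mult R (mat_mult R (embed1 R u) e2) (embed1 R u')"
  have c: "c \<in> EL R" unfolding c_def by (rule conj_EL[OF u u' uu uu' e2])
  have "mat_mult R (mat_mult R e1 c) (mat_mult R (embed1 R u) B)
     = mat_mult R e1 (mat_mult R (embed1 R u) (mat_mult R e2 (mat_mult R (mat_mult R (embed1 R u') (embed1 R u)) B)))"
    unfolding c_def using f1 f2 fu fu' B by (simp add: mm_assoc mm_finitary)
  also have "\<dots> = x"
    using x f1 f2 fu fu' B u u' uu' by (simp add: mm_assoc mm_finitary embed1_mult embed1_one mm_one_left finitary_carr)
  finally show "x \<in> EL R #>\<^bsub>GL R\<^esub> (mat_mult R (embed1 R u) B)"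
    unfolding rcos_iff using EL_mult[OF e1 c] by metis
next
  fix x assume "x \<in> EL R #>\<^bsub>GL R\<^esub> (mat_mult R (embed1 R u) B)"
  then obtain e where e: "e \<in> EL R" and x: "x = mat_mult R e (mat_mult R (embed1 R u) B)" unfolding rcos_iff by blast
  have fe: "finitary R e" using e EL_finitary by blast
  have "x = mat_mult R (mat_mult R e (embed1 R u)) (mat_mult R (mat_one R) B)"
    using x fe B embed1_finitary[OF u] by (simp add: mm_assoc mm_one_left finitary_carr)
  moreover have "mat_mult R e (embed1 R u) \<in> EL R #>\<^bsub>GL R\<^esub> embed1 R u" unfolding rcos_iff using e by blast
  moreover have "mat_mult R (mat_one R) B \<in> EL R #>\<^bsub>GL R\<^esub> B" unfolding rcos_iff using EL_one by blast
  ultimately show "x \<in> (EL R #>\<^bsub>GL R\<^esub> embed1 R u) <#>\<^bsub>GL R\<^esub> (EL R #>\<^bsub>GL R\<^esub> B)"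
    unfolding smult_iff by blast
qed

end


context novctx
begin

lemma conv_comm:
  assumes comm: "\<And>x y. x \<in> carrier G \<Longrightarrow> y \<in> carrier G \<Longrightarrow> x \<otimes> y = y \<otimes> x"
    and f: "f \<in> NC" and h: "h \<in> NC"
  shows "nov_mult G f h = nov_mult G h f"
proof
  fix g show "nov_mult G f h g = nov_mult G h f g"
  proof (cases "g \<in> carrier G")
    case False thus ?thesis by (simp add: conv_out)
  next
    case g: True
    have key: "inv (inv k \<otimes> g) \<otimes> g = k" if k: "k \<in> carrier G" for k
    proof -
      have "inv (inv k \<otimes> g) \<otimes> g = (inv g \<otimes> k) \<otimes> g" using k g by (simp add: inv_mult_group)
      also have "\<dots> = (k \<otimes> inv g) \<otimes> g" using k g comm by simp
      also have "\<dots> = k" using k g by (simp add: m_assoc)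
      finally show ?thesis .
    qed
    let ?m = "\<lambda>k. inv k \<otimes> g"
    have inj: "inj_on ?m (Kset f h g)"
    proof (rule inj_onI)
      fix x y assume x: "x \<in> Kset f h g" and y: "y \<in> Kset f h g" and e: "?m x = ?m y"
      have "x \<in> carrier G" "y \<in> carrier G" using x y by (auto simp: Kset_def)
      then show "x = y" using e key by metis
    qed
    have "nov_mult G h f g = (\<Sum>k\<in>?m ` Kset f h g. h k * f (inv k \<otimes> g))"
    proof (rule conv_eq[OF h g])
      show "finite (?m ` Kset f h g)" using Kset_fin[OF f h g] by simp
      show "Kset h f g \<subseteq> ?m ` Kset f h g"
      proof
        fix k' assume "k' \<in> Kset h f g"
        then have k': "k' \<in> carrier G" "h k' \<noteq> 0" "f (inv k' \<otimes> g) \<noteq> 0" by (auto simp: Kset_def)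
        have "inv (inv k' \<otimes> g) \<otimes> g = k'" using key[of k'] k' g
        proof -
          have "inv (inv k' \<otimes> g) \<otimes> g = (inv g \<otimes> k') \<otimes> g" using k' g by (simp add: inv_mult_group)
          also have "\<dots> = (k' \<otimes> inv g) \<otimes> g" using k' g comm by simp
          also have "\<dots> = k'" using k' g by (simp add: m_assoc)
          finally show ?thesis .
        qed
        then have "inv k' \<otimes> g \<in> Kset f h g" using k' g by (auto simp: Kset_def)
        moreover have "k' = ?m (inv k' \<otimes> g)" using \<open>inv (inv k' \<otimes> g) \<otimes> g = k'\<close> by simp
        ultimately show "k' \<in> ?m ` Kset f h g" by blast
      qed
    qed
    also have "\<dots> = (\<Sum>k\<in>Kset f h g. h (?m k) * f (inv (?m k) \<otimes> g))"
      by (rule sum.reindex[OF inj, unfolded comp_def])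
    also have "\<dots> = (\<Sum>k\<in>Kset f h g. f k * h (inv k \<otimes> g))"
      by (intro sum.cong refl) (auto simp: Kset_def key)
    also have "\<dots> = nov_mult G f h g" using g by (simp add: nov_mult_def Kset_def)
    finally show ?thesis by simp
  qed
qed

lemma nov_cring:
  assumes comm: "\<And>x y. x \<in> carrier G \<Longrightarrow> y \<in> carrier G \<Longrightarrow> x \<otimes> y = y \<otimes> x"
  shows "cring R"
proof -
  interpret RR: ring R by (rule nov_ring)
  show ?thesis
  proof (rule cringI)
    show "abelian_group R" by (rule RR.is_abelian_group)
    show "comm_monoid R"
      by (rule RR.monoid_comm_monoidI) (simp add: conv_comm[OF comm])
  qed (simp add: conv_ldistr)
qed

definition NN :: "'a set" where "NN = derived G (carrier G)"

abbreviation "Gab \<equiv> G Mod NN"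

lemma NN_normal: "NN \<lhd> G"
  unfolding NN_def by (rule derived_self_is_normal)

lemma NN_sub: "subgroup NN G"
  using NN_normal by (simp add: normal_def)

lemma xi_NN: "n \<in> NN \<Longrightarrow> xi n = 0"
proof -
  let ?K = "{x \<in> carrier G. xi x = 0}"
  have sK: "subgroup ?K G"
    by (rule subgroupI) (auto simp: xi_hom)
  have "derived_set G (carrier G) \<subseteq> ?K"
    by (auto simp: xi_hom)
  then have "NN \<subseteq> ?K" unfolding NN_def derived_def by (rule generate_subgroup_incl[OF _ sK])
  thus "n \<in> NN \<Longrightarrow> xi n = 0" by auto
qed

lemma rcos_mem_iff: "g \<in> NN #> x \<longleftrightarrow> (\<exists>n\<in>NN. g = n \<otimes> x)"
  by (auto simp: r_coset_def)

lemma xi_coset: "x \<in> carrier G \<Longrightarrow> g \<in> NN #> x \<Longrightarrow> xi g = xi x"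
  using xi_NN subgroup.mem_carrier[OF NN_sub] by (auto simp: rcos_mem_iff xi_hom)

definition xiab :: "'a set \<Rightarrow> real" where "xiab C = xi (SOME g. g \<in> C)"

lemma xiab_coset: "x \<in> carrier G \<Longrightarrow> xiab (NN #> x) = xi x"
proof -
  assume x: "x \<in> carrier G"
  have "x \<in> NN #> x" using rcos_self[OF x NN_sub] .
  then have "(SOME g. g \<in> NN #> x) \<in> NN #> x" by (rule someI)
  thus ?thesis unfolding xiab_def using xi_coset[OF x] by blast
qed

lemma Gab_carrier: "C \<in> carrier Gab \<longleftrightarrow> (\<exists>x\<in>carrier G. C = NN #> x)"
  by (auto simp: carrier_FactGroup)

lemma Gab_comm_group: "comm_group Gab"
  unfolding NN_def by (rule derived_quot_is_comm_group)

lemma Gab_group: "group Gab"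
  using Gab_comm_group comm_group.axioms(2) by blast

lemma Gab_mult: "x \<in> carrier G \<Longrightarrow> y \<in> carrier G \<Longrightarrow> (NN #> x) \<otimes>\<^bsub>Gab\<^esub> (NN #> y) = NN #> (x \<otimes> y)"
  using normal.rcos_sum[OF NN_normal] by simp

lemma Gab_inv: "x \<in> carrier G \<Longrightarrow> inv\<^bsub>Gab\<^esub> (NN #> x) = NN #> inv x"
  using normal.inv_FactGroup[OF NN_normal] normal.rcos_inv[OF NN_normal] Gab_carrier by auto

lemma Gab_one: "\<one>\<^bsub>Gab\<^esub> = NN" by simp

lemma ab_ctx: "novctx Gab xiab"
proof -
  interpret AB: group Gab by (rule Gab_group)
  show ?thesis
  proof (unfold_locales)
    fix C D assume C: "C \<in> carrier Gab" and D: "D \<in> carrier Gab"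
    then obtain x y where x: "x \<in> carrier G" "C = NN #> x" and y: "y \<in> carrier G" "D = NN #> y"
      by (auto simp: Gab_carrier)
    show "xiab (C \<otimes>\<^bsub>Gab\<^esub> D) = xiab C + xiab D"
      using x y normal.rcos_sum[OF NN_normal, of x y] by (simp add: xiab_coset xi_hom)
  qed
qed

abbreviation "S \<equiv> novikov_ring Gab xiab"

lemma S_cring: "cring S"
proof -
  interpret CG: comm_group Gab by (rule Gab_comm_group)
  show ?thesis using novctx.nov_cring[OF ab_ctx] CG.m_comm by blast
qed


lemma Gab_mult': "x \<in> carrier G \<Longrightarrow> y \<in> carrier G \<Longrightarrow> (NN #> x) <#> (NN #> y) = NN #> (x \<otimes> y)"
  using normal.rcos_sum[OF NN_normal] by simp

lemma coset_eq: "C \<in> carrier Gab \<Longrightarrow> x \<in> carrier G \<Longrightarrow> (x \<in> C \<longleftrightarrow> C = NN #> x)"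
  using rcos_self[OF _ NN_sub] repr_independence[OF _ _ NN_sub] by (auto simp: Gab_carrier)

lemma coset_in: "x \<in> carrier G \<Longrightarrow> NN #> x \<in> carrier Gab"
  by (auto simp: Gab_carrier)

lemma coset_sub: "C \<in> carrier Gab \<Longrightarrow> C \<subseteq> carrier G"
  using subgroup.mem_carrier[OF NN_sub] by (auto simp: Gab_carrier rcos_mem_iff)

lemma xi_coset2: "C \<in> carrier Gab \<Longrightarrow> g \<in> C \<Longrightarrow> xi g = xiab C"
  using xi_coset xiab_coset by (auto simp: Gab_carrier)

definition phi :: "('a \<Rightarrow> int) \<Rightarrow> 'a set \<Rightarrow> int" where
  "phi f = (\<lambda>C. if C \<in> carrier Gab then (\<Sum>g\<in>{g\<in>C. f g \<noteq> 0}. f g) else 0)"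

lemma phi_fin: "f \<in> NC \<Longrightarrow> C \<in> carrier Gab \<Longrightarrow> finite {g\<in>C. f g \<noteq> 0}"
proof -
  assume f: "f \<in> NC" and C: "C \<in> carrier Gab"
  have "{g\<in>C. f g \<noteq> 0} \<subseteq> {g. xiab C \<le> xi g \<and> f g \<noteq> 0}" using xi_coset2[OF C] by auto
  thus ?thesis using NC_fin[OF f] finite_subset by blast
qed

lemma phi_eq:
  assumes f: "f \<in> NC" and C: "C \<in> carrier Gab" and F: "finite F" "{g\<in>C. f g \<noteq> 0} \<subseteq> F" "F \<subseteq> C"
  shows "phi f C = (\<Sum>g\<in>F. f g)"
  unfolding phi_def using C by simp (rule sum.mono_neutral_left[OF F(1,2)], use F in auto)

lemma phi_out: "C \<notin> carrier Gab \<Longrightarrow> phi f C = 0" by (simp add: phi_def)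

lemma phi_nz: "phi f C \<noteq> 0 \<Longrightarrow> C \<in> carrier Gab \<and> (\<exists>g\<in>C. f g \<noteq> 0)"
proof -
  assume nz: "phi f C \<noteq> 0"
  then have C: "C \<in> carrier Gab" by (auto simp: phi_def split: if_splits)
  show ?thesis
  proof (rule ccontr)
    assume "\<not> ?thesis"
    then have "{g\<in>C. f g \<noteq> 0} = {}" using C by auto
    then show False using nz C unfolding phi_def by simp
  qed
qed

lemma phi_NC: "f \<in> NC \<Longrightarrow> phi f \<in> nov_carrier Gab xiab"
proof -
  assume f: "f \<in> NC"
  have "finite {C \<in> carrier Gab. r \<le> xiab C \<and> phi f C \<noteq> 0}" for r
  proof (rule finite_subset)
    show "{C \<in> carrier Gab. r \<le> xiab C \<and> phi f C \<noteq> 0} \<subseteq> (\<lambda>g. NN #> g) ` {g. r \<le> xi g \<and> f g \<noteq> 0}"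
    proof
      fix C assume "C \<in> {C \<in> carrier Gab. r \<le> xiab C \<and> phi f C \<noteq> 0}"
      then have C: "C \<in> carrier Gab" "r \<le> xiab C" "phi f C \<noteq> 0" by auto
      then obtain g where g: "g \<in> C" "f g \<noteq> 0" using phi_nz by blast
      have gc: "g \<in> carrier G" using g coset_sub[OF C(1)] by blast
      have "C = NN #> g" using coset_eq[OF C(1) gc] g by simp
      moreover have "r \<le> xi g" using xi_coset2[OF C(1) g(1)] C(2) by simp
      ultimately show "C \<in> (\<lambda>g. NN #> g) ` {g. r \<le> xi g \<and> f g \<noteq> 0}" using g by blast
    qed
    show "finite ((\<lambda>g. NN #> g) ` {g. r \<le> xi g \<and> f g \<noteq> 0})" using NC_fin[OF f] by simp
  qed
  thus ?thesis by (simp add: nov_carrier_def phi_out)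
qed

lemma phi_diff: "f \<in> NC \<Longrightarrow> h \<in> NC \<Longrightarrow> phi (\<lambda>g. f g - h g) = (\<lambda>C. phi f C - phi h C)"
proof
  fix C assume f: "f \<in> NC" and h: "h \<in> NC"
  show "phi (\<lambda>g. f g - h g) C = phi f C - phi h C"
  proof (cases "C \<in> carrier Gab")
    case False thus ?thesis by (simp add: phi_out)
  next
    case C: True
    let ?F = "{g\<in>C. f g \<noteq> 0} \<union> {g\<in>C. h g \<noteq> 0}"
    have fin: "finite ?F" using phi_fin[OF f C] phi_fin[OF h C] by simp
    have d: "(\<lambda>g. f g - h g) \<in> NC" using add_NC[OF f neg_NC[OF h]] by simp
    have 1: "phi (\<lambda>g. f g - h g) C = (\<Sum>g\<in>?F. f g - h g)" by (rule phi_eq[OF d C fin]) auto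
    have 2: "phi f C = (\<Sum>g\<in>?F. f g)" by (rule phi_eq[OF f C fin]) auto
    have 3: "phi h C = (\<Sum>g\<in>?F. h g)" by (rule phi_eq[OF h C fin]) auto
    show ?thesis using 1 2 3 by (simp add: sum_subtractf)
  qed
qed

lemma phi_dl: "x \<in> carrier G \<Longrightarrow> phi (dl s x) = (\<lambda>C. if C = NN #> x then s else 0)"
proof
  fix C assume x: "x \<in> carrier G"
  show "phi (dl s x) C = (if C = NN #> x then s else 0)"
  proof (cases "C \<in> carrier Gab")
    case False
    then have "C \<noteq> NN #> x" using coset_in[OF x] by blast
    thus ?thesis using False by (simp add: phi_out dl_def)
  next
    case C: True
    have "phi (dl s x) C = (\<Sum>g\<in>(if x \<in> C then {x} else {}). dl s x g)"
      by (rule phi_eq[OF dl_NC[OF x] C]) (auto simp: dl_def)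
    thus ?thesis using coset_eq[OF C x] by (auto simp: dl_def)
  qed
qed

lemma NN_coset_one: "NN #> \<one> = NN"
  using subgroup.subset[OF NN_sub] by (simp add: coset_mult_one)

lemma phi_one: "phi (one R) = one S"
  using phi_dl[of \<one> 1] NN_coset_one
  by (simp add: R_one_dl novctx.R_one[OF ab_ctx])

lemma phi_mult:
  assumes f: "f \<in> NC" and h: "h \<in> NC"
  shows "phi (nov_mult G f h) = nov_mult Gab (phi f) (phi h)"
proof
  fix C
  show "phi (nov_mult G f h) C = nov_mult Gab (phi f) (phi h) C"
  proof (cases "C \<in> carrier Gab")
    case False thus ?thesis by (simp add: phi_out novctx.conv_out[OF ab_ctx])
  next
    case Cc: True
    then obtain x0 where x0: "x0 \<in> carrier G" "C = NN #> x0" by (auto simp: Gab_carrier)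
    define c0 where "c0 = xi x0"
    have xiC: "g \<in> C \<Longrightarrow> xi g = c0" for g using xi_coset[OF x0(1)] x0(2) c0_def by simp
    obtain Mf where Mf: "\<And>x. f x \<noteq> 0 \<Longrightarrow> xi x \<le> Mf" using NC_bound[OF f] by blast
    obtain Mh where Mh: "\<And>x. h x \<noteq> 0 \<Longrightarrow> xi x \<le> Mh" using NC_bound[OF h] by blast
    define A where "A = {k. c0 - Mh \<le> xi k \<and> f k \<noteq> 0}"
    define B where "B = {b. c0 - Mf \<le> xi b \<and> h b \<noteq> 0}"
    define P where "P = {p \<in> A \<times> B. fst p \<otimes> snd p \<in> C}"
    define Cg where "Cg = (\<lambda>p. fst p \<otimes> snd p) ` P"
    have finA: "finite A" unfolding A_def using NC_fin[OF f] .
    have finB: "finite B" unfolding B_def using NC_fin[OF h] .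
    have finCg: "finite Cg" unfolding Cg_def P_def using finA finB by auto
    have Ac: "A \<subseteq> carrier G" unfolding A_def using NC_nz[OF f] by blast
    have Bc: "B \<subseteq> carrier G" unfolding B_def using NC_nz[OF h] by blast
    have CgC: "Cg \<subseteq> C" unfolding Cg_def P_def by auto
    have Csub: "C \<subseteq> carrier G" using coset_sub[OF Cc] .
    have fh: "nov_mult G f h \<in> NC" using conv_closed[OF f h] .
    have L1: "phi (nov_mult G f h) C = (\<Sum>g\<in>Cg. nov_mult G f h g)"
    proof (rule phi_eq[OF fh Cc finCg _ CgC])
      show "{g \<in> C. nov_mult G f h g \<noteq> 0} \<subseteq> Cg"
      proof
        fix g assume "g \<in> {g \<in> C. nov_mult G f h g \<noteq> 0}"
        then have g: "g \<in> C" "nov_mult G f h g \<noteq> 0" by auto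
        have gc: "g \<in> carrier G" using g Csub by blast
        obtain k where k: "k \<in> carrier G" "f k \<noteq> 0" "h (inv k \<otimes> g) \<noteq> 0" using conv_nz[OF gc g(2)] by blast
        have e: "xi (inv k \<otimes> g) = c0 - xi k" using xi_invmult[OF k(1) gc] xiC[OF g(1)] by simp
        have "(k, inv k \<otimes> g) \<in> P"
          using k e Mh[OF k(3)] Mf[OF k(2)] g(1) k(1) gc
          by (auto simp: P_def A_def B_def m_assoc[symmetric])
        moreover have "g = k \<otimes> (inv k \<otimes> g)" using k(1) gc by (simp add: m_assoc[symmetric])
        ultimately show "g \<in> Cg" unfolding Cg_def by force
      qed
    qed
    have L2: "nov_mult G f h g = (\<Sum>k\<in>A. f k * h (inv k \<otimes> g))" if gC: "g \<in> Cg" for g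
    proof (rule conv_eq[OF f _ finA])
      show gc: "g \<in> carrier G" using gC CgC Csub by blast
      show "Kset f h g \<subseteq> A"
      proof
        fix k assume "k \<in> Kset f h g"
        then have k: "k \<in> carrier G" "f k \<noteq> 0" "h (inv k \<otimes> g) \<noteq> 0" by (auto simp: Kset_def)
        have e: "xi (inv k \<otimes> g) = c0 - xi k" using xi_invmult[OF k(1) gc] xiC gC CgC by auto
        show "k \<in> A" using k e Mh[OF k(3)] by (auto simp: A_def)
      qed
    qed
    have LHS: "phi (nov_mult G f h) C = (\<Sum>k\<in>A. f k * (\<Sum>g\<in>Cg. h (inv k \<otimes> g)))"
    proof -
      have "phi (nov_mult G f h) C = (\<Sum>g\<in>Cg. \<Sum>k\<in>A. f k * h (inv k \<otimes> g))" using L1 L2 by simp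
      also have "\<dots> = (\<Sum>k\<in>A. \<Sum>g\<in>Cg. f k * h (inv k \<otimes> g))" by (rule sum.swap)
      also have "\<dots> = (\<Sum>k\<in>A. f k * (\<Sum>g\<in>Cg. h (inv k \<otimes> g)))" by (simp add: sum_distrib_left)
      finally show ?thesis .
    qed
    define Dset where "Dset = (\<lambda>k. NN #> k) ` A"
    have finD: "finite Dset" unfolding Dset_def using finA by simp
    have R1: "nov_mult Gab (phi f) (phi h) C = (\<Sum>D\<in>Dset. phi f D * phi h (inv\<^bsub>Gab\<^esub> D \<otimes>\<^bsub>Gab\<^esub> C))"
    proof (rule novctx.conv_eq[OF ab_ctx phi_NC[OF f] Cc finD])
      show "novctx.Kset Gab (phi f) (phi h) C \<subseteq> Dset"
      proof
        fix D assume "D \<in> novctx.Kset Gab (phi f) (phi h) C"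
        then have D: "D \<in> carrier Gab" "phi f D \<noteq> 0" "phi h (inv\<^bsub>Gab\<^esub> D \<otimes>\<^bsub>Gab\<^esub> C) \<noteq> 0"
          by (auto simp: novctx.Kset_def[OF ab_ctx])
        obtain k where k: "k \<in> D" "f k \<noteq> 0" using phi_nz[OF D(2)] by blast
        have kc: "k \<in> carrier G" using k coset_sub[OF D(1)] by blast
        have Dk: "D = NN #> k" using coset_eq[OF D(1) kc] k by simp
        have E: "inv\<^bsub>Gab\<^esub> D \<otimes>\<^bsub>Gab\<^esub> C = NN #> (inv k \<otimes> x0)"
          using Dk x0 kc by (simp add: Gab_inv Gab_mult')
        obtain b where b: "b \<in> NN #> (inv k \<otimes> x0)" "h b \<noteq> 0" using phi_nz[OF D(3)] E by auto
        have "xi b = c0 - xi k" using xi_coset[of "inv k \<otimes> x0" b] b kc x0 by (simp add: xi_invmult c0_def)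
        then have "k \<in> A" using Mh[OF b(2)] k(2) by (auto simp: A_def)
        thus "D \<in> Dset" using Dk by (auto simp: Dset_def)
      qed
    qed
    have R2: "phi f D = (\<Sum>k\<in>{k\<in>A. NN #> k = D}. f k)" if DD: "D \<in> Dset" for D
    proof -
      from DD obtain k0 where k0: "k0 \<in> A" "D = NN #> k0" by (auto simp: Dset_def)
      have k0c: "k0 \<in> carrier G" using k0 Ac by blast
      have Dc: "D \<in> carrier Gab" using coset_in[OF k0c] k0 by simp
      show ?thesis
      proof (rule phi_eq[OF f Dc])
        show "finite {k\<in>A. NN #> k = D}" using finA by simp
        show "{k\<in>A. NN #> k = D} \<subseteq> D" using rcos_self[OF _ NN_sub] Ac by blast
        show "{g \<in> D. f g \<noteq> 0} \<subseteq> {k\<in>A. NN #> k = D}"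
        proof
          fix g assume "g \<in> {g \<in> D. f g \<noteq> 0}"
          then have g: "g \<in> D" "f g \<noteq> 0" by auto
          have gc: "g \<in> carrier G" using g coset_sub[OF Dc] by blast
          have "xi g = xi k0" using xi_coset[OF k0c] g k0 by simp
          then have "g \<in> A" using k0(1) g(2) by (auto simp: A_def)
          moreover have "NN #> g = D" using coset_eq[OF Dc gc] g by simp
          ultimately show "g \<in> {k\<in>A. NN #> k = D}" by simp
        qed
      qed
    qed
    have R3: "phi h (inv\<^bsub>Gab\<^esub> (NN #> k) \<otimes>\<^bsub>Gab\<^esub> C) = (\<Sum>g\<in>Cg. h (inv k \<otimes> g))" if kA: "k \<in> A" for k
    proof -
      have kc: "k \<in> carrier G" using kA Ac by blast
      define E where "E = NN #> (inv k \<otimes> x0)"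
      have Eeq: "inv\<^bsub>Gab\<^esub> (NN #> k) \<otimes>\<^bsub>Gab\<^esub> C = E"
        unfolding E_def using kc x0 by (simp add: Gab_inv Gab_mult')
      have Ec: "E \<in> carrier Gab" unfolding E_def using kc x0 by (simp add: coset_in)
      let ?m = "\<lambda>g. inv k \<otimes> g"
      have inj: "inj_on ?m Cg" using CgC Csub kc by (intro inj_onI) (auto simp: subset_iff)
      have "(\<Sum>g\<in>Cg. h (inv k \<otimes> g)) = (\<Sum>b\<in>?m ` Cg. h b)"
        by (simp add: sum.reindex[OF inj])
      also have "\<dots> = phi h E"
      proof (rule phi_eq[OF h Ec, symmetric])
        show "finite (?m ` Cg)" using finCg by simp
        show "?m ` Cg \<subseteq> E"
        proof
          fix b assume "b \<in> ?m ` Cg"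
          then obtain g where g: "g \<in> Cg" "b = inv k \<otimes> g" by blast
          have gc: "g \<in> carrier G" using g CgC Csub by blast
          have NNg: "NN #> g = C" using coset_eq[OF Cc gc] g CgC by blast
          have "NN #> b = (NN #> inv k) <#> (NN #> g)" using g kc gc by (simp add: Gab_mult')
          also have "\<dots> = E" unfolding E_def NNg x0(2) using kc x0 by (simp add: Gab_mult')
          finally show "b \<in> E" using rcos_self[OF _ NN_sub, of b] g kc gc by simp
        qed
        show "{g \<in> E. h g \<noteq> 0} \<subseteq> ?m ` Cg"
        proof
          fix b assume "b \<in> {g \<in> E. h g \<noteq> 0}"
          then have b: "b \<in> E" "h b \<noteq> 0" by auto
          have bc: "b \<in> carrier G" using b coset_sub[OF Ec] by blast
          have NNb: "NN #> b = E" using coset_eq[OF Ec bc] b by simp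
          have "NN #> (k \<otimes> b) = (NN #> k) <#> (NN #> b)" using kc bc by (simp add: Gab_mult')
          also have "\<dots> = NN #> (k \<otimes> (inv k \<otimes> x0))" unfolding NNb E_def using kc x0 by (simp add: Gab_mult')
          also have "\<dots> = C" using kc x0 by (simp add: m_assoc[symmetric])
          finally have kbC: "k \<otimes> b \<in> C" using rcos_self[OF _ NN_sub, of "k \<otimes> b"] kc bc by simp
          have "xi b = c0 - xi k" using xi_coset[of "inv k \<otimes> x0" b] b kc x0 by (simp add: xi_invmult c0_def E_def)
          then have "b \<in> B" using Mf[of k] kA b(2) by (auto simp: B_def A_def)
          then have "(k, b) \<in> P" using kA kbC by (simp add: P_def)
          then have "k \<otimes> b \<in> Cg" unfolding Cg_def by force
          moreover have "b = inv k \<otimes> (k \<otimes> b)" using kc bc by (simp add: m_assoc[symmetric])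
          ultimately show "b \<in> ?m ` Cg" by blast
        qed
      qed
      finally show ?thesis using Eeq by simp
    qed
    have "nov_mult Gab (phi f) (phi h) C = (\<Sum>D\<in>Dset. (\<Sum>k\<in>{k\<in>A. NN #> k = D}. f k) * phi h (inv\<^bsub>Gab\<^esub> D \<otimes>\<^bsub>Gab\<^esub> C))"
      using R1 R2 by simp
    also have "\<dots> = (\<Sum>D\<in>Dset. \<Sum>k\<in>{k\<in>A. NN #> k = D}. f k * phi h (inv\<^bsub>Gab\<^esub> (NN #> k) \<otimes>\<^bsub>Gab\<^esub> C))"
      by (intro sum.cong refl) (simp add: sum_distrib_right)
    also have "\<dots> = (\<Sum>k\<in>A. f k * phi h (inv\<^bsub>Gab\<^esub> (NN #> k) \<otimes>\<^bsub>Gab\<^esub> C))"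
      by (rule sum.group[OF finA finD]) (auto simp: Dset_def)
    also have "\<dots> = (\<Sum>k\<in>A. f k * (\<Sum>g\<in>Cg. h (inv k \<otimes> g)))"
      using R3 by simp
    finally show ?thesis using LHS by simp
  qed
qed

end


sublocale novctx \<subseteq> RR: ring "novikov_ring G xi"
  by (rule nov_ring)

context novctx
begin

declare dl_NC[simp]

lemma dl_unit: "x \<in> carrier G \<Longrightarrow> (s = 1 \<or> s = -1) \<Longrightarrow>
   nov_mult G (dl s x) (dl s (inv x)) = one R \<and> nov_mult G (dl s (inv x)) (dl s x) = one R"
  by (auto simp: dl_mult R_one_dl)

lemma dl_carr: "x \<in> carrier G \<Longrightarrow> dl s x \<in> carrier R"
  by (simp add: dl_NC)

lemma embed1_dl_GL: "x \<in> carrier G \<Longrightarrow> (s = 1 \<or> s = -1) \<Longrightarrow> embed1 R (dl s x) \<in> carrier (GL R)"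
proof -
  assume x: "x \<in> carrier G" and s: "s = 1 \<or> s = -1"
  have c1: "dl s x \<in> carrier R" and c2: "dl s (inv x) \<in> carrier R" using x by (auto simp: dl_carr)
  show ?thesis
    unfolding RR.GL_carrier
    using dl_unit[OF x s] c1 c2
    by (auto simp: RR.embed1_finitary RR.embed1_mult RR.embed1_one intro!: exI[of _ "embed1 R (dl s (inv x))"])
qed

lemma embed1_dl_inv: "x \<in> carrier G \<Longrightarrow> (s = 1 \<or> s = -1) \<Longrightarrow>
   inv\<^bsub>GL R\<^esub> (embed1 R (dl s x)) = embed1 R (dl s (inv x))"
proof -
  assume x: "x \<in> carrier G" and s: "s = 1 \<or> s = -1"
  have c1: "dl s x \<in> carrier R" and c2: "dl s (inv x) \<in> carrier R" using x by (auto simp: dl_carr)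
  show ?thesis
    using group.inv_equality[OF RR.GL_group, of "embed1 R (dl s (inv x))" "embed1 R (dl s x)"]
      dl_unit[OF x s] c1 c2 embed1_dl_GL[OF x s] embed1_dl_GL[of "inv x" s] x s
    by (simp add: RR.embed1_mult RR.embed1_one)
qed

abbreviation "ELR \<equiv> EL R"
abbreviation "GLR \<equiv> GL R"

definition Tset where
  "Tset = {ELR #>\<^bsub>GLR\<^esub> embed1 R (dl s g) | s g. g \<in> carrier G \<and> (s = 1 \<or> s = -1)}"

lemma EL_cos_one: "ELR #>\<^bsub>GLR\<^esub> mat_one R = ELR"
  using RR.EL_finitary by (auto simp: r_coset_def RR.mm_one_right)

lemma triv_gens_eq: "k1_class R (\<lambda>h. if h = g then s else 0) = ELR #>\<^bsub>GLR\<^esub> embed1 R (dl s g)"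
  by (simp add: k1_class_def dl_def)

lemma K1_simps: "carrier (K1 R) = rcosets\<^bsub>GLR\<^esub> ELR" "monoid.mult (K1 R) = set_mult GLR" "one (K1 R) = ELR"
  by (simp_all add: K1_def FactGroup_def)

lemma cos_dl_mult:
  assumes x: "x \<in> carrier G" "s = 1 \<or> s = -1" and B: "finitary R B"
  shows "(ELR #>\<^bsub>GLR\<^esub> embed1 R (dl s x)) <#>\<^bsub>GLR\<^esub> (ELR #>\<^bsub>GLR\<^esub> B) =
         ELR #>\<^bsub>GLR\<^esub> (mat_mult R (embed1 R (dl s x)) B)"
  by (rule RR.cos_diag_mult[of _ "dl s (inv x)"]) (use dl_unit[OF x] x B in \<open>auto simp: dl_carr\<close>)

lemma K1_inv_dl:
  assumes x: "x \<in> carrier G" and s: "s = 1 \<or> s = -1"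
  shows "inv\<^bsub>K1 R\<^esub> (ELR #>\<^bsub>GLR\<^esub> embed1 R (dl s x)) = ELR #>\<^bsub>GLR\<^esub> embed1 R (dl s (inv x))"
proof -
  let ?D = "embed1 R (dl s x)" and ?D' = "embed1 R (dl s (inv x))"
  have ix: "inv x \<in> carrier G" using x by simp
  have fD: "finitary R ?D" and fD': "finitary R ?D'" using x by (auto simp: RR.embed1_finitary dl_carr)
  have DD': "mat_mult R ?D ?D' = mat_one R" and D'D: "mat_mult R ?D' ?D = mat_one R"
    using dl_unit[OF x s] x by (auto simp: RR.embed1_mult RR.embed1_one dl_carr)
  have p1: "(ELR #>\<^bsub>GLR\<^esub> ?D) <#>\<^bsub>GLR\<^esub> (ELR #>\<^bsub>GLR\<^esub> ?D') = ELR"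
    using cos_dl_mult[OF x s fD'] DD' EL_cos_one by simp
  have p2: "(ELR #>\<^bsub>GLR\<^esub> ?D') <#>\<^bsub>GLR\<^esub> (ELR #>\<^bsub>GLR\<^esub> ?D) = ELR"
    using cos_dl_mult[OF ix s fD] D'D EL_cos_one x by simp
  have cD': "ELR #>\<^bsub>GLR\<^esub> ?D' \<in> rcosets\<^bsub>GLR\<^esub> ELR"
    using embed1_dl_GL[OF ix s] by (auto simp: RCOSETS_def)
  have uniq: "y = ELR #>\<^bsub>GLR\<^esub> ?D'" if y: "y \<in> rcosets\<^bsub>GLR\<^esub> ELR" and e: "(ELR #>\<^bsub>GLR\<^esub> ?D) <#>\<^bsub>GLR\<^esub> y = ELR" for y
  proof -
    from y obtain B where B: "B \<in> carrier GLR" "y = ELR #>\<^bsub>GLR\<^esub> B" by (auto simp: RCOSETS_def)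
    have fB: "finitary R B" using B RR.GL_finitary by blast
    have "ELR #>\<^bsub>GLR\<^esub> (mat_mult R ?D B) = ELR" using e B cos_dl_mult[OF x s fB] by simp
    then have E: "mat_mult R ?D B \<in> ELR"
      using RR.cos_mem[OF RR.mm_finitary[OF fD fB]] by simp
    define c where "c = mat_mult R (mat_mult R ?D' (mat_mult R ?D B)) ?D"
    have c: "c \<in> ELR" unfolding c_def
      by (rule RR.conj_EL[OF _ _ _ _ E]) (use dl_unit[OF ix s] x in \<open>auto simp: dl_carr\<close>)
    have "mat_mult R c ?D' = mat_mult R ?D' (mat_mult R ?D B)"
      unfolding c_def using fD fD' fB DD' by (simp add: RR.mm_assoc RR.mm_finitary RR.mm_one_right)
    also have "\<dots> = mat_mult R (mat_mult R ?D' ?D) B" using fD fD' fB by (simp add: RR.mm_assoc)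
    also have "\<dots> = B" using D'D RR.mm_one_left[of B] RR.finitary_carr[OF fB] by simp
    finally have "y = ELR #>\<^bsub>GLR\<^esub> (mat_mult R c ?D')" using B by simp
    also have "\<dots> = ELR #>\<^bsub>GLR\<^esub> ?D'" by (rule RR.cos_absorb[OF c fD'])
    finally show ?thesis .
  qed
  show ?thesis
    unfolding m_inv_def[of "K1 R"]
    apply (rule the_equality)
    subgoal using p1 p2 cD' by (simp add: K1_simps)
    subgoal for y using uniq by (simp add: K1_simps)
    done
qed

lemma trivial_sub: "nov_trivial G xi \<subseteq> Tset"
proof
  fix t assume "t \<in> nov_trivial G xi"
  then show "t \<in> Tset" unfolding nov_trivial_def
  proof (induction t rule: generate.induct)
    case one
    have "\<one>\<^bsub>K1 R\<^esub> = ELR #>\<^bsub>GLR\<^esub> embed1 R (dl 1 \<one>)"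
      using EL_cos_one by (simp add: K1_simps R_one_dl[symmetric] RR.embed1_one)
    then show ?case unfolding Tset_def by blast
  next
    case (incl h)
    then show ?case unfolding Tset_def by (auto simp: triv_gens_eq)
  next
    case (inv h)
    then obtain g s where h: "h = ELR #>\<^bsub>GLR\<^esub> embed1 R (dl s g)" "g \<in> carrier G" "s = 1 \<or> s = -1"
      by (auto simp: triv_gens_eq)
    then show ?case using K1_inv_dl[OF h(2,3)] unfolding Tset_def by auto
  next
    case (eng h1 h2)
    then obtain g1 s1 g2 s2 where h: "h1 = ELR #>\<^bsub>GLR\<^esub> embed1 R (dl s1 g1)" "g1 \<in> carrier G" "s1 = 1 \<or> s1 = -1"
      "h2 = ELR #>\<^bsub>GLR\<^esub> embed1 R (dl s2 g2)" "g2 \<in> carrier G" "s2 = 1 \<or> s2 = -1"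
      unfolding Tset_def by blast
    have "h1 \<otimes>\<^bsub>K1 R\<^esub> h2 = ELR #>\<^bsub>GLR\<^esub> embed1 R (dl (s1 * s2) (g1 \<otimes> g2))"
      using cos_dl_mult[OF h(2,3), of "embed1 R (dl s2 g2)"] h
      by (simp add: K1_simps RR.embed1_finitary dl_carr RR.embed1_mult dl_mult)
    moreover have "s1 * s2 = 1 \<or> s1 * s2 = -1" using h by auto
    ultimately show ?case unfolding Tset_def using h by blast
  qed
qed

lemma NN_EL: "g \<in> NN \<Longrightarrow> embed1 R (dl 1 g) \<in> ELR"
proof -
  let ?H = "{g \<in> carrier G. embed1 R (dl 1 g) \<in> ELR}"
  have sH: "subgroup ?H G"
  proof (rule subgroupI)
    show "?H \<noteq> {}" using RR.EL_one by (auto intro!: exI[of _ \<one>] simp: R_one_dl[symmetric] RR.embed1_one)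
    fix a b assume a: "a \<in> ?H" and b: "b \<in> ?H"
    show "inv a \<in> ?H" using a RR.EL_inv[of "embed1 R (dl 1 a)"] embed1_dl_inv[of a 1] by auto
    show "a \<otimes> b \<in> ?H" using a b RR.EL_mult[of "embed1 R (dl 1 a)" "embed1 R (dl 1 b)"]
      by (auto simp: RR.embed1_mult dl_carr dl_mult)
  qed auto
  have "derived_set G (carrier G) \<subseteq> ?H"
  proof (clarsimp)
    fix h1 h2 assume h1: "h1 \<in> carrier G" and h2: "h2 \<in> carrier G"
    have "embed1 R (nov_mult G (nov_mult G (nov_mult G (dl 1 h1) (dl 1 h2)) (dl 1 (inv h1))) (dl 1 (inv h2))) \<in> ELR"
      using RR.whitehead[of "dl 1 h1" "dl 1 (inv h1)" "dl 1 h2" "dl 1 (inv h2)"]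
        dl_unit[of h1 1] dl_unit[of h2 1] h1 h2 by simp
    then show "embed1 R (dl 1 (h1 \<otimes> h2 \<otimes> inv h1 \<otimes> inv h2)) \<in> ELR"
      using h1 h2 by (simp add: dl_mult)
  qed
  then have "NN \<subseteq> ?H" unfolding NN_def derived_def by (rule generate_subgroup_incl[OF _ sH])
  thus "g \<in> NN \<Longrightarrow> embed1 R (dl 1 g) \<in> ELR" by blast
qed

end


context novctx
begin

lemma phi_add: "f \<in> NC \<Longrightarrow> h \<in> NC \<Longrightarrow> phi (\<lambda>g. f g + h g) = (\<lambda>C. phi f C + phi h C)"
proof
  fix C assume f: "f \<in> NC" and h: "h \<in> NC"
  show "phi (\<lambda>g. f g + h g) C = phi f C + phi h C"
  proof (cases "C \<in> carrier Gab")
    case False thus ?thesis by (simp add: phi_out)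
  next
    case C: True
    let ?F = "{g\<in>C. f g \<noteq> 0} \<union> {g\<in>C. h g \<noteq> 0}"
    have fin: "finite ?F" using phi_fin[OF f C] phi_fin[OF h C] by simp
    have d: "(\<lambda>g. f g + h g) \<in> NC" using add_NC[OF f h] by simp
    have 1: "phi (\<lambda>g. f g + h g) C = (\<Sum>g\<in>?F. f g + h g)" by (rule phi_eq[OF d C fin]) auto
    have 2: "phi f C = (\<Sum>g\<in>?F. f g)" by (rule phi_eq[OF f C fin]) auto
    have 3: "phi h C = (\<Sum>g\<in>?F. h g)" by (rule phi_eq[OF h C fin]) auto
    show ?thesis using 1 2 3 by (simp add: sum.distrib)
  qed
qed

lemma conv_zero_right[simp]: "f \<in> NC \<Longrightarrow> nov_mult G f (\<lambda>_. 0) = (\<lambda>_. 0)"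
  using RR.r_null[of f] by simp

lemma mm_one_left_fin: "finitary R M \<Longrightarrow> mat_mult R (mat_one R) M = M"
  using RR.mm_one_left RR.finitary_carr by metis

lemma phi_zero: "phi (\<lambda>_. 0) = (\<lambda>_. 0)"
  by (auto simp: phi_def)

lemma S_simps: "carrier S = nov_carrier Gab xiab" "add S = (\<lambda>f h g. f g + h g)" "zero S = (\<lambda>_. 0)"
  "monoid.mult S = nov_mult Gab"
  by (simp_all add: novikov_ring_def)

lemma phi_rowop: "x \<in> carrier R \<Longrightarrow> r \<in> carrier R \<Longrightarrow> y \<in> carrier R \<Longrightarrow>
   phi (x \<oplus>\<^bsub>R\<^esub> r \<otimes>\<^bsub>R\<^esub> y) = phi x \<oplus>\<^bsub>S\<^esub> phi r \<otimes>\<^bsub>S\<^esub> phi y"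
  by (simp add: S_simps phi_add phi_mult conv_closed)

lemma S_no2: "z \<in> carrier S \<Longrightarrow> z \<oplus>\<^bsub>S\<^esub> z = \<zero>\<^bsub>S\<^esub> \<Longrightarrow> z = \<zero>\<^bsub>S\<^esub>"
proof -
  assume "z \<oplus>\<^bsub>S\<^esub> z = \<zero>\<^bsub>S\<^esub>"
  then have "\<And>C. z C + z C = 0" by (simp add: S_simps fun_eq_iff)
  then show ?thesis by (simp add: S_simps fun_eq_iff)
qed

definition Phi :: "(nat \<Rightarrow> nat \<Rightarrow> 'a \<Rightarrow> int) \<Rightarrow> nat \<Rightarrow> nat \<Rightarrow> 'a set \<Rightarrow> int" where
  "Phi M = (\<lambda>l m. phi (M l m))"

definition bnd :: "nat \<Rightarrow> (nat \<Rightarrow> nat \<Rightarrow> 'a \<Rightarrow> int) \<Rightarrow> bool" where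
  "bnd n M \<longleftrightarrow> (\<forall>l m. (n \<le> l \<or> n \<le> m) \<longrightarrow> M l m = mat_one R l m)"

abbreviation "detS \<equiv> cring.detn S"

lemma Phi_carr: "finitary R M \<Longrightarrow> Phi M l m \<in> carrier S"
  unfolding Phi_def using RR.finitary_carr phi_NC by (simp add: S_simps)

lemma elem_step:
  assumes ij: "i \<noteq> j" and r: "r \<in> carrier R" and n: "i < n" "j < n"
    and M: "finitary R M" and bM: "bnd n M"
  shows "bnd n (mat_mult R (elem_mat R i j r) M) \<and> detS n (Phi (mat_mult R (elem_mat R i j r) M)) = detS n (Phi M)"
proof -
  interpret SS: cring S by (rule S_cring)
  have cM: "\<And>l m. M l m \<in> carrier R" using RR.finitary_carr[OF M] .
  have EM: "mat_mult R (elem_mat R i j r) M = M(i := (\<lambda>m. M i m \<oplus>\<^bsub>R\<^esub> r \<otimes>\<^bsub>R\<^esub> M j m))"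
    by (intro ext) (simp add: RR.elem_row[OF ij r cM])
  have b: "bnd n (mat_mult R (elem_mat R i j r) M)"
    unfolding bnd_def
  proof (intro allI impI)
    fix l m assume lm: "n \<le> l \<or> n \<le> m"
    show "mat_mult R (elem_mat R i j r) M l m = mat_one R l m"
    proof (cases "l = i")
      case False
      have "M l m = mat_one R l m" using bM lm unfolding bnd_def by blast
      thus ?thesis using False by (simp add: EM)
    next
      case True
      then have m: "n \<le> m" using lm n by auto
      have "M i m = \<zero>\<^bsub>R\<^esub>" "M j m = \<zero>\<^bsub>R\<^esub>" using bM m n by (auto simp: bnd_def mat_one_def)
      then show ?thesis using True m n r by (simp add: EM mat_one_def)
    qed
  qed
  have PEM: "Phi (mat_mult R (elem_mat R i j r) M) = (Phi M)(i := (\<lambda>m. Phi M i m \<oplus>\<^bsub>S\<^esub> phi r \<otimes>\<^bsub>S\<^esub> Phi M j m))"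
  proof (intro ext)
    fix l m C
    show "Phi (mat_mult R (elem_mat R i j r) M) l m C = ((Phi M)(i := (\<lambda>m. Phi M i m \<oplus>\<^bsub>S\<^esub> phi r \<otimes>\<^bsub>S\<^esub> Phi M j m))) l m C"
      by (cases "l = i") (simp_all add: EM Phi_def phi_rowop[OF cM r cM] del: R_add R_mult)
  qed
  have "detS n (Phi (mat_mult R (elem_mat R i j r) M)) = detS n (Phi M)"
    unfolding PEM
    by (rule SS.detn_rowop[OF S_no2 ij n]) (use Phi_carr[OF M] phi_NC r in \<open>auto simp: S_simps\<close>)
  with b show ?thesis by simp
qed

lemma detEL:
  assumes E: "E \<in> ELR"
  shows "\<exists>N. \<forall>n\<ge>N. \<forall>M. finitary R M \<longrightarrow> bnd n M \<longrightarrow>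
           bnd n (mat_mult R E M) \<and> detS n (Phi (mat_mult R E M)) = detS n (Phi M)"
  using E unfolding EL_def
proof (induction E rule: generate.induct)
  case one
  show ?case by (intro exI[of _ 0]) (auto simp: mm_one_left_fin)
next
  case (incl h)
  then obtain i j r where h: "h = elem_mat R i j r" "i \<noteq> j" "r \<in> carrier R" by blast
  show ?case using elem_step[OF h(2,3)] h(1) by (intro exI[of _ "Suc (max i j)"]) auto
next
  case (inv h)
  then obtain i j r where h: "h = elem_mat R i j r" "i \<noteq> j" "r \<in> carrier R" by blast
  have r': "\<ominus>\<^bsub>R\<^esub> r \<in> carrier R" by (rule RR.a_inv_closed[OF h(3)])
  show ?case using elem_step[OF h(2) r'] h RR.inv_elem[OF h(2,3)]
    by (intro exI[of _ "Suc (max i j)"]) auto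
next
  case (eng h1 h2)
  from eng.IH obtain N1 where N1: "\<forall>n\<ge>N1. \<forall>M. finitary R M \<longrightarrow> bnd n M \<longrightarrow>
           bnd n (mat_mult R h1 M) \<and> detS n (Phi (mat_mult R h1 M)) = detS n (Phi M)" by blast
  from eng.IH obtain N2 where N2: "\<forall>n\<ge>N2. \<forall>M. finitary R M \<longrightarrow> bnd n M \<longrightarrow>
           bnd n (mat_mult R h2 M) \<and> detS n (Phi (mat_mult R h2 M)) = detS n (Phi M)" by blast
  have f1: "finitary R h1" and f2: "finitary R h2" using eng.hyps RR.EL_finitary unfolding EL_def by auto
  show ?case
  proof (intro exI[of _ "max N1 N2"] allI impI)
    fix n M assume n: "max N1 N2 \<le> n" and M: "finitary R M" and bM: "bnd n M"
    have fM2: "finitary R (mat_mult R h2 M)" using RR.mm_finitary[OF f2 M] .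
    have a: "mat_mult R (h1 \<otimes>\<^bsub>GL R\<^esub> h2) M = mat_mult R h1 (mat_mult R h2 M)"
      using f1 f2 M by (simp add: RR.mm_assoc)
    show "bnd n (mat_mult R (h1 \<otimes>\<^bsub>GL R\<^esub> h2) M) \<and> detS n (Phi (mat_mult R (h1 \<otimes>\<^bsub>GL R\<^esub> h2) M)) = detS n (Phi M)"
      unfolding a using N1[rule_format, OF _ fM2] N2[rule_format, OF _ M bM] n by auto
  qed
qed

lemma det_embed1:
  assumes u: "u \<in> carrier R" and n: "1 \<le> n"
  shows "detS n (Phi (embed1 R u)) = phi u"
proof -
  interpret SS: cring S by (rule S_cring)
  have c: "Phi (embed1 R u) l m \<in> carrier S" for l m using Phi_carr RR.embed1_finitary[OF u] by blast
  have "detS n (Phi (embed1 R u)) = (\<Otimes>\<^bsub>S\<^esub>l\<in>{..<n}. Phi (embed1 R u) l l)"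
    by (rule SS.detn_diag) (use c in \<open>auto simp: Phi_def RR.embed1_apply phi_zero S_simps\<close>)
  also have "\<dots> = Phi (embed1 R u) 0 0 \<otimes>\<^bsub>S\<^esub> (\<Otimes>\<^bsub>S\<^esub>l\<in>{..<n} - {0}. Phi (embed1 R u) l l)"
    by (rule SS.fprod_split) (use n c in auto)
  also have "(\<Otimes>\<^bsub>S\<^esub>l\<in>{..<n} - {0}. Phi (embed1 R u) l l) = \<one>\<^bsub>S\<^esub>"
    by (rule SS.finprod_one_eqI) (simp add: Phi_def RR.embed1_apply RR.dg_def phi_one)
  moreover have pc: "phi u \<in> carrier S" using u phi_NC by (simp add: S_simps)
  ultimately show ?thesis using SS.r_one[OF pc] by (simp add: Phi_def RR.embed1_apply RR.dg_def)
qed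

lemma norm_neg:
  assumes a: "a \<in> NC" and na: "nov_norm xi a < 1" and g: "a g \<noteq> 0"
  shows "xi g < 0"
proof (rule ccontr)
  assume "\<not> xi g < 0"
  then have g0: "0 \<le> xi g" by simp
  let ?T = "{t::real. t > 0 \<and> (\<forall>g. a g \<noteq> 0 \<longrightarrow> xi g \<le> ln t)}"
  obtain M where M: "\<And>x. a x \<noteq> 0 \<Longrightarrow> xi x \<le> M" using NC_bound[OF a] by blast
  have ne: "exp M \<in> ?T" using M by auto
  have "1 \<le> t" if t: "t \<in> ?T" for t
  proof -
    have "xi g \<le> ln t" using t g by blast
    then have "0 \<le> ln t" using g0 by linarith
    thus ?thesis using t by (simp add: ln_ge_zero_iff)
  qed
  moreover have "?T \<noteq> {}" using ne by blast
  ultimately have "1 \<le> Inf ?T" by (intro cInf_greatest) auto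
  thus False using na by (simp add: nov_norm_def)
qed

lemma phi_supp_neg:
  assumes a: "a \<in> NC" and na: "nov_norm xi a < 1" and nz: "phi a C \<noteq> 0"
  shows "xiab C < 0"
proof -
  from phi_nz[OF nz] obtain g where C: "C \<in> carrier Gab" and g: "g \<in> C" "a g \<noteq> 0" by blast
  show ?thesis using xi_coset2[OF C g(1)] norm_neg[OF a na g(2)] by simp
qed

end


context novctx
begin

lemma one_NC: "one R \<in> NC" by (simp add: R_one_dl)

lemma sub_NC: "f \<in> NC \<Longrightarrow> h \<in> NC \<Longrightarrow> (\<lambda>g. f g - h g) \<in> NC"
  using add_NC[OF _ neg_NC] by simp

lemma S_one: "one S = (\<lambda>C. if C = NN then 1 else 0)"
  by (simp add: novctx.R_one[OF ab_ctx])

lemma lead: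
  assumes a: "a \<in> NC" "nov_norm xi a < 1" and b: "b \<in> NC" "nov_norm xi b < 1"
    and g: "g \<in> carrier G" and s: "s = 1 \<or> s = -1"
    and eq: "phi (\<lambda>h. one R h - a h) = phi (nov_mult G (dl s g) (\<lambda>h. one R h - b h))"
  shows "s = 1 \<and> g \<in> NN"
proof -
  define ub where "ub = (\<lambda>h. one R h - b h)"
  have ub: "ub \<in> NC" unfolding ub_def using sub_NC[OF one_NC b(1)] .
  have L: "phi (\<lambda>h. one R h - a h) = (\<lambda>C. (if C = NN then 1 else 0) - phi a C)"
    using phi_diff[OF one_NC a(1)] phi_one S_one by simp
  have pub: "phi ub = (\<lambda>C. (if C = NN then 1 else 0) - phi b C)"
    unfolding ub_def using phi_diff[OF one_NC b(1)] phi_one S_one by simp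
  have gc: "NN #> g \<in> carrier Gab" using coset_in[OF g] .
  have pdl: "phi (dl s g) = novctx.dl s (NN #> g)"
    using phi_dl[OF g] by (simp add: novctx.dl_def[OF ab_ctx])
  have Rr: "phi (nov_mult G (dl s g) ub) = (\<lambda>C. if C \<in> carrier Gab then s * phi ub (inv\<^bsub>Gab\<^esub> (NN #> g) \<otimes>\<^bsub>Gab\<^esub> C) else 0)"
    using phi_mult[OF dl_NC[OF g] ub] pdl novctx.conv_dl_left[OF ab_ctx gc phi_NC[OF ub]] by simp
  have e: "\<And>C. (if C = NN then 1 else 0) - phi a C =
      (if C \<in> carrier Gab then s * phi ub (inv\<^bsub>Gab\<^esub> (NN #> g) \<otimes>\<^bsub>Gab\<^esub> C) else 0)"
  proof -
    fix C
    have "phi (\<lambda>h. one R h - a h) C = phi (nov_mult G (dl s g) ub) C" using eq unfolding ub_def by simp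
    then show "(if C = NN then 1 else 0) - phi a C =
      (if C \<in> carrier Gab then s * phi ub (inv\<^bsub>Gab\<^esub> (NN #> g) \<otimes>\<^bsub>Gab\<^esub> C) else 0)"
      unfolding L Rr by simp
  qed
  have NNc: "NN \<in> carrier Gab" using coset_in[of \<one>] NN_coset_one by simp
  have xiNN: "xiab NN = 0" using xiab_coset[of \<one>] NN_coset_one by simp
  have aNN: "phi a NN = 0" using phi_supp_neg[OF a] xiNN by force
  have bNN: "phi b NN = 0" using phi_supp_neg[OF b] xiNN by force
  have ig: "inv g \<in> carrier G" using g by simp
  have m1: "inv\<^bsub>Gab\<^esub> (NN #> g) \<otimes>\<^bsub>Gab\<^esub> (NN #> g) = NN"
    using g by (simp add: Gab_inv Gab_mult' NN_coset_one)
  have m2: "inv\<^bsub>Gab\<^esub> (NN #> g) \<otimes>\<^bsub>Gab\<^esub> NN = NN #> inv g"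
  proof -
    have "inv\<^bsub>Gab\<^esub> (NN #> g) \<otimes>\<^bsub>Gab\<^esub> (NN #> \<one>) = NN #> inv g"
      using g by (simp add: Gab_inv Gab_mult')
    thus ?thesis using NN_coset_one by simp
  qed
  have e1: "(if NN #> g = NN then 1 else 0) - phi a (NN #> g) = s"
    using e[of "NN #> g"] gc m1 pub bNN by simp
  have e2: "1 = s * ((if NN #> inv g = NN then 1 else 0) - phi b (NN #> inv g))"
    using e[of NN] NNc m2 pub aNN by simp
  show ?thesis
  proof (cases "NN #> g = NN")
    case True
    have "g \<in> NN" using rcos_self[OF g NN_sub] True by simp
    moreover have "s = 1" using e1 True aNN by simp
    ultimately show ?thesis by simp
  next
    case False
    have "phi a (NN #> g) \<noteq> 0" using e1 False s by auto
    then have n1: "xi g < 0" using phi_supp_neg[OF a] xiab_coset[OF g] by force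
    have "NN #> inv g \<noteq> NN"
    proof
      assume "NN #> inv g = NN"
      then have "inv g \<in> NN" using rcos_self[OF ig NN_sub] by simp
      then have "g \<in> NN" using subgroup.m_inv_closed[OF NN_sub] g by fastforce
      then show False using False subgroup.rcos_const[OF NN_sub is_group] by simp
    qed
    then have "phi b (NN #> inv g) \<noteq> 0" using e2 by auto
    then have "xi (inv g) < 0" using phi_supp_neg[OF b] xiab_coset[OF ig] by force
    then show ?thesis using n1 g by simp
  qed
qed

lemma main_inj:
  assumes x: "x \<in> nov_W G xi" and y: "y \<in> nov_W G xi" and eq: "nov_proj G xi x = nov_proj G xi y"
  shows "x = y"
proof -
  from x obtain a where a: "a \<in> NC" "nov_norm xi a < 1" and xa: "x = k1_class R (\<lambda>g. one R g - a g)"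
    by (auto simp: nov_W_def nov_small_units_def)
  from y obtain b where b: "b \<in> NC" "nov_norm xi b < 1" and yb: "y = k1_class R (\<lambda>g. one R g - b g)"
    by (auto simp: nov_W_def nov_small_units_def)
  define ua where "ua = (\<lambda>g. one R g - a g)"
  define ub where "ub = (\<lambda>g. one R g - b g)"
  have ua: "ua \<in> NC" unfolding ua_def using sub_NC[OF one_NC a(1)] .
  have ub: "ub \<in> NC" unfolding ub_def using sub_NC[OF one_NC b(1)] .
  have fX: "finitary R (embed1 R ua)" using RR.embed1_finitary ua by simp
  have fY: "finitary R (embed1 R ub)" using RR.embed1_finitary ub by simp
  have x': "x = ELR #>\<^bsub>GLR\<^esub> embed1 R ua" using xa by (simp add: k1_class_def ua_def)
  have y': "y = ELR #>\<^bsub>GLR\<^esub> embed1 R ub" using yb by (simp add: k1_class_def ub_def)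
  have ELt: "ELR \<in> nov_trivial G xi"
    unfolding nov_trivial_def using generate.one[of "K1 R"] by (simp add: K1_simps)
  have "x \<in> nov_proj G xi x"
  proof -
    have "ELR \<otimes>\<^bsub>K1 R\<^esub> x = x" using x' RR.cos_EL_mult[OF fX] by (simp add: K1_simps)
    thus ?thesis unfolding nov_proj_def r_coset_def using ELt by force
  qed
  then have "x \<in> nov_proj G xi y" using eq by simp
  then have "x \<in> (\<Union>h\<in>nov_trivial G xi. {h \<otimes>\<^bsub>K1 R\<^esub> y})"
    unfolding nov_proj_def r_coset_def .
  then obtain t where t: "t \<in> nov_trivial G xi" and xt0: "x = t \<otimes>\<^bsub>K1 R\<^esub> y" by blast
  have xt: "x = t <#>\<^bsub>GLR\<^esub> y" using xt0 by (simp add: K1_simps)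
  from t trivial_sub obtain s g where g: "g \<in> carrier G" "s = 1 \<or> s = -1" and tg: "t = ELR #>\<^bsub>GLR\<^esub> embed1 R (dl s g)"
    unfolding Tset_def by blast
  define m where "m = nov_mult G (dl s g) ub"
  have mc: "m \<in> NC" unfolding m_def using conv_closed[OF dl_NC[OF g(1)] ub] .
  have DY: "mat_mult R (embed1 R (dl s g)) (embed1 R ub) = embed1 R m"
    using RR.embed1_mult[of "dl s g" ub] g ub by (simp add: m_def)
  have xm: "x = ELR #>\<^bsub>GLR\<^esub> embed1 R m"
    using xt tg y' cos_dl_mult[OF g fY] DY by simp
  have fM: "finitary R (embed1 R m)" using RR.embed1_finitary mc by simp
  obtain E where E: "E \<in> ELR" and XE: "embed1 R ua = mat_mult R E (embed1 R m)"
    using RR.cos_eq_mem[OF fX] x' xm by metis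
  obtain N where N: "\<forall>n\<ge>N. \<forall>M. finitary R M \<longrightarrow> bnd n M \<longrightarrow>
           bnd n (mat_mult R E M) \<and> detS n (Phi (mat_mult R E M)) = detS n (Phi M)"
    using detEL[OF E] by blast
  define n where "n = max N 1"
  have bM: "bnd n (embed1 R m)"
    unfolding bnd_def n_def by (auto simp: RR.embed1_apply RR.dg_def mat_one_def)
  have "detS n (Phi (embed1 R ua)) = detS n (Phi (embed1 R m))"
    using N[rule_format, OF _ fM bM] XE n_def by simp
  then have "phi ua = phi m" using det_embed1[of ua n] det_embed1[of m n] ua mc n_def by simp
  then have "phi (\<lambda>h. one R h - a h) = phi (nov_mult G (dl s g) (\<lambda>h. one R h - b h))"
    unfolding ua_def m_def ub_def .
  then have sg: "s = 1 \<and> g \<in> NN" by (rule lead[OF a b g])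
  then have D: "embed1 R (dl s g) \<in> ELR" using NN_EL by simp
  have "x = ELR #>\<^bsub>GLR\<^esub> mat_mult R (embed1 R (dl s g)) (embed1 R ub)" using xm DY by simp
  also have "\<dots> = ELR #>\<^bsub>GLR\<^esub> embed1 R ub" by (rule RR.cos_absorb[OF D fY])
  finally have "x = ELR #>\<^bsub>GLR\<^esub> embed1 R ub" .
  then show ?thesis using y' by (simp only:)
qed

end

theorem lemma7p1:
  fixes G :: "('g,'b) monoid_scheme" and \<xi> :: "'g \<Rightarrow> real"
  assumes "group G"
    and "\<forall>x\<in>carrier G. \<forall>y\<in>carrier G. \<xi> (x \<otimes>\<^bsub>G\<^esub> y) = \<xi> x + \<xi> y"
  shows "bij_betw (nov_proj G \<xi>) (nov_W G \<xi>) (nov_proj G \<xi> ` nov_W G \<xi>)"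
proof -
  have ctx: "novctx G \<xi>"
    by (intro novctx.intro novctx_axioms.intro) (use assms in auto)
  have "inj_on (nov_proj G \<xi>) (nov_W G \<xi>)"
    by (rule inj_onI) (rule novctx.main_inj[OF ctx])
  then show ?thesis by (simp add: bij_betw_def)
qed

end
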